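(* Let $m,n\ge3$ and $n'\ge2$. Then (a) $C_m$ and $C_n$ are weakly disjoint if and only if they share no non-trivial common graph factor; (b) $C_m$ and $P_{n'}$ are strongly disjoint if and only if they share no non-trivial common graph factor.
   Context: A weight function on finite $U$ is $\alpha:U\times U\to\mathbb{R}$, $\alpha\ge0$, symmetric, summing to $1$; degree $p(u)=\sum_{u'}\alpha(u,u')$; a graph is $(U,\alpha)$; non-trivial means at least two vertices have positive degree. $C_k$ ($k\ge3$): vertices $u_1,\dots,u_k$, $\alpha(u_i,u_{i\pm1})=1/(2k)$ (indices mod $k$), other weights $0$. $P_k$ ($k\ge2$): vertices $u_1,\dots,u_k$, $\alpha(u_i,u_{i+1})=\alpha(u_{i+1},u_i)=1/(2(k-1))$, other weights $0$. For graphs $G=(U,\alpha)$, $H=(V,\beta)$ with degrees $p,q$, $H\mid G$ means there is a surjective $\phi:U\to V$ with (i) $q(v)=\sum_{u\in\phi^{-1}(v)}p(u)$, and (ii) $q(v)\sum_{u'\in\phi^{-1}(v')}\alpha(u,u')=p(u)\beta(v,v')$ for all $v,v'$, $u\in\phi^{-1}(v)$; a common factor of $G,H$ is a graph $K$ with $K\mid G$ and $K\mid H$. A weight joining of $\alpha,\beta$ is a weight function $\gamma$ on $U\times V$ with degree $r(u,v)=\sum_{(u',v')}\gamma((u,v),(u',v'))$ such that $\sum_v r(u,v)=p(u)$, $\sum_u r(u,v)=q(v)$, $p(u)\sum_{\tilde v}\gamma((u,v),(u',\tilde v))=\alpha(u,u')r(u,v)$ and $q(v)\sum_{\tilde u}\gamma((u,v),(\tilde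 u,v'))=\beta(v,v')r(u,v)$. Strongly disjoint: the only weight joining is $\alpha\otimes\beta$, $(\alpha\otimes\beta)((u,v),(u',v'))=\alpha(u,u')\beta(v,v')$; weakly disjoint: every weight joining has degree $r(u,v)=p(u)q(v)$. *)

theory Defs
  imports Main "HOL.Real"
begin

text \<open>A graph is a pair (U, alpha): U a finite vertex set and alpha a weight function
  on U (non-negative, symmetric, summing to 1). Values outside U x U are fixed to 0.\<close>

definition weight_fun :: "'a set \<Rightarrow> ('a \<Rightarrow> 'a \<Rightarrow> real) \<Rightarrow> bool" where
  "weight_fun U \<alpha> \<longleftrightarrow> finite U \<and> (\<forall>x y. 0 \<le> \<alpha> x y) \<and> (\<forall>x y. \<alpha> x y = \<alpha> y x)
     \<and> (\<forall>x y. (x \<notin> U \<or> y \<notin> U) \<longrightarrow> \<alpha> x y = 0)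
     \<and> (\<Sum>x\<in>U. \<Sum>y\<in>U. \<alpha> x y) = 1"

definition wdeg :: "'a set \<Rightarrow> ('a \<Rightarrow> 'a \<Rightarrow> real) \<Rightarrow> 'a \<Rightarrow> real" where
  "wdeg U \<alpha> u = (\<Sum>u'\<in>U. \<alpha> u u')"

definition nontrivial_graph :: "'a set \<Rightarrow> ('a \<Rightarrow> 'a \<Rightarrow> real) \<Rightarrow> bool" where
  "nontrivial_graph U \<alpha> \<longleftrightarrow> (\<exists>u\<in>U. \<exists>v\<in>U. u \<noteq> v \<and> 0 < wdeg U \<alpha> u \<and> 0 < wdeg U \<alpha> v)"

text \<open>Cycle C_k and path P_k, with vertices u_1..u_k represented by 0..<k.\<close>

definition cycle_w :: "nat \<Rightarrow> nat \<Rightarrow> nat \<Rightarrow> real" where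
  "cycle_w k i j = (if i < k \<and> j < k \<and> (j = (i + 1) mod k \<or> i = (j + 1) mod k)
                    then 1 / (2 * real k) else 0)"

definition path_w :: "nat \<Rightarrow> nat \<Rightarrow> nat \<Rightarrow> real" where
  "path_w k i j = (if i < k \<and> j < k \<and> (j = i + 1 \<or> i = j + 1)
                   then 1 / (2 * (real k - 1)) else 0)"

definition graph_factor :: "'b set \<Rightarrow> ('b \<Rightarrow> 'b \<Rightarrow> real) \<Rightarrow> 'a set \<Rightarrow> ('a \<Rightarrow> 'a \<Rightarrow> real) \<Rightarrow> bool" where
  "graph_factor V \<beta> U \<alpha> \<longleftrightarrow> (\<exists>\<phi>. \<phi> ` U = V
     \<and> (\<forall>v\<in>V. wdeg V \<beta> v = (\<Sum>u\<in>{u\<in>U. \<phi> u = v}. wdeg U \<alpha> u))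
     \<and> (\<forall>v\<in>V. \<forall>v'\<in>V. \<forall>u\<in>U. \<phi> u = v \<longrightarrow>
          wdeg V \<beta> v * (\<Sum>u'\<in>{u'\<in>U. \<phi> u' = v'}. \<alpha> u u') = wdeg U \<alpha> u * \<beta> v v'))"

text \<open>Since a factor of G is the surjective image of
  the finite vertex set of G, it suffices (up to isomorphism) to consider factors with vertex
  set a subset of nat.\<close>

definition has_nontrivial_common_factor ::
  "'a set \<Rightarrow> ('a \<Rightarrow> 'a \<Rightarrow> real) \<Rightarrow> 'b set \<Rightarrow> ('b \<Rightarrow> 'b \<Rightarrow> real) \<Rightarrow> bool" where
  "has_nontrivial_common_factor U \<alpha> V \<beta> \<longleftrightarrow>
     (\<exists>(W::nat set) \<kappa>. weight_fun W \<kappa> \<and> nontrivial_graph W \<kappa>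
        \<and> graph_factor W \<kappa> U \<alpha> \<and> graph_factor W \<kappa> V \<beta>)"

definition weight_joining ::
  "'a set \<Rightarrow> ('a \<Rightarrow> 'a \<Rightarrow> real) \<Rightarrow> 'b set \<Rightarrow> ('b \<Rightarrow> 'b \<Rightarrow> real)
     \<Rightarrow> ('a \<times> 'b \<Rightarrow> 'a \<times> 'b \<Rightarrow> real) \<Rightarrow> bool" where
  "weight_joining U \<alpha> V \<beta> \<gamma> \<longleftrightarrow> weight_fun (U \<times> V) \<gamma>
     \<and> (\<forall>u\<in>U. (\<Sum>v\<in>V. wdeg (U \<times> V) \<gamma> (u, v)) = wdeg U \<alpha> u)
     \<and> (\<forall>v\<in>V. (\<Sum>u\<in>U. wdeg (U \<times> V) \<gamma> (u, v)) = wdeg V \<beta> v)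
     \<and> (\<forall>u\<in>U. \<forall>u'\<in>U. \<forall>v\<in>V.
          wdeg U \<alpha> u * (\<Sum>v'\<in>V. \<gamma> (u, v) (u', v')) = \<alpha> u u' * wdeg (U \<times> V) \<gamma> (u, v))
     \<and> (\<forall>u\<in>U. \<forall>v\<in>V. \<forall>v'\<in>V.
          wdeg V \<beta> v * (\<Sum>u'\<in>U. \<gamma> (u, v) (u', v')) = \<beta> v v' * wdeg (U \<times> V) \<gamma> (u, v))"

definition tensor_weight ::
  "('a \<Rightarrow> 'a \<Rightarrow> real) \<Rightarrow> ('b \<Rightarrow> 'b \<Rightarrow> real) \<Rightarrow> ('a \<times> 'b \<Rightarrow> 'a \<times> 'b \<Rightarrow> real)" where
  "tensor_weight \<alpha> \<beta> = (\<lambda>(u, v) (u', v'). \<alpha> u u' * \<beta> v v')"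

definition strongly_disjoint ::
  "'a set \<Rightarrow> ('a \<Rightarrow> 'a \<Rightarrow> real) \<Rightarrow> 'b set \<Rightarrow> ('b \<Rightarrow> 'b \<Rightarrow> real) \<Rightarrow> bool" where
  "strongly_disjoint U \<alpha> V \<beta> \<longleftrightarrow>
     (\<forall>\<gamma>. weight_joining U \<alpha> V \<beta> \<gamma> \<longrightarrow> \<gamma> = tensor_weight \<alpha> \<beta>)"

definition weakly_disjoint ::
  "'a set \<Rightarrow> ('a \<Rightarrow> 'a \<Rightarrow> real) \<Rightarrow> 'b set \<Rightarrow> ('b \<Rightarrow> 'b \<Rightarrow> real) \<Rightarrow> bool" where
  "weakly_disjoint U \<alpha> V \<beta> \<longleftrightarrow>
     (\<forall>\<gamma>. weight_joining U \<alpha> V \<beta> \<gamma> \<longrightarrow>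
        (\<forall>u\<in>U. \<forall>v\<in>V. wdeg (U \<times> V) \<gamma> (u, v) = wdeg U \<alpha> u * wdeg V \<beta> v))"

end

theory Submission
  imports Defs "HOL-Number_Theory.Cong"
begin


lemma sum_two_points:
  assumes "finite S" "a \<in> S" "b \<in> S" "a \<noteq> b" "\<And>z. z \<in> S \<Longrightarrow> z \<noteq> a \<Longrightarrow> z \<noteq> b \<Longrightarrow> f z = 0"
  shows "sum f S = f a + f b"
proof -
  have "sum f S = sum f {a,b}"
    by (rule sum.mono_neutral_right) (use assms in auto)
  then show ?thesis using assms by simp
qed

lemma sum_one_point:
  assumes "finite S" "a \<in> S" "\<And>z. z \<in> S \<Longrightarrow> z \<noteq> a \<Longrightarrow> f z = 0"
  shows "sum f S = f a"
proof -
  have "sum f S = sum f {a}"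
    by (rule sum.mono_neutral_right) (use assms in auto)
  then show ?thesis using assms by simp
qed

lemma orbit_const:
  fixes f :: "nat \<Rightarrow> nat \<Rightarrow> real" and m L c :: nat
  assumes "0 < m" "0 < L"
    and step: "\<And>u w. u < m \<Longrightarrow> w < L \<Longrightarrow> f u w = f ((u+1) mod m) ((w + c) mod L)"
  shows "f (k mod m) ((c*k) mod L) = f 0 0"
proof (induction k)
  case 0 then show ?case by simp
next
  case (Suc k)
  have "f (k mod m) ((c*k) mod L) = f ((k mod m + 1) mod m) (((c*k) mod L + c) mod L)"
    using step[of "k mod m" "(c*k) mod L"] assms(1,2) by simp
  also have "(k mod m + 1) mod m = Suc k mod m" by (simp add: mod_Suc_eq)
  also have "((c*k) mod L + c) mod L = (c * Suc k) mod L" by (metis mod_add_left_eq add.commute mult_Suc_right)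
  finally show ?case using Suc by simp
qed

lemma orbit_const_all:
  fixes f :: "nat \<Rightarrow> nat \<Rightarrow> real" and m L :: nat
  assumes "0 < m" "0 < L" "coprime m L"
    and step: "\<And>u w. u < m \<Longrightarrow> w < L \<Longrightarrow> f u w = f ((u+1) mod m) ((w + 1) mod L)"
    and "u < m" "w < L"
  shows "f u w = f 0 0"
proof -
  obtain k where "[k = u] (mod m)" "[k = w] (mod L)"
    using binary_chinese_remainder_nat[OF assms(3)] by blast
  then have "k mod m = u" "k mod L = w" using assms by (auto simp: cong_def)
  moreover have "f (k mod m) ((1*k) mod L) = f 0 0"
    by (rule orbit_const[of m L f 1 k, OF assms(1,2) step])
  ultimately show ?thesis by simp
qed

lemma orbit_const_all':
  fixes f :: "nat \<Rightarrow> nat \<Rightarrow> real" and m n :: nat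
  assumes "0 < m" "1 < n" "coprime m n"
    and step: "\<And>u w. u < m \<Longrightarrow> w < n \<Longrightarrow> f u w = f ((u+1) mod m) ((w + (n-1)) mod n)"
    and "u < m" "w < n"
  shows "f u w = f 0 0"
proof -
  obtain k where "[k = u] (mod m)" "[k = (n-1)*w] (mod n)"
    using binary_chinese_remainder_nat[OF assms(3)] by blast
  then have k1: "k mod m = u" and k2: "k mod n = ((n-1)*w) mod n" using assms by (auto simp: cong_def)
  have "((n-1)*k) mod n = ((n-1)*(k mod n)) mod n" by (simp add: mod_mult_right_eq)
  also have "... = ((n-1)*(((n-1)*w) mod n)) mod n" using k2 by simp
  also have "... = ((n-1)*((n-1)*w)) mod n" by (simp add: mod_mult_right_eq)
  also have "(n-1)*((n-1)*w) = n*((n-2)*w) + w"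
  proof -
    define j where "j = n - 2"
    have j: "n = j + 2" using assms(2) j_def by simp
    have "(n-1)*((n-1)*w) = (j+1)*((j+1)*w)" using j by simp
    also have "... = (j+2)*(j*w) + w" by (simp add: algebra_simps)
    also have "... = n*((n-2)*w) + w" using j by simp
    finally show ?thesis .
  qed
  also have "(n*((n-2)*w) + w) mod n = w" using assms(6) by simp
  finally have k3: "((n-1)*k) mod n = w" .
  have "f (k mod m) (((n-1)*k) mod n) = f 0 0"
    by (rule orbit_const[of m n f "n-1" k, OF assms(1) _ step]) (use assms(2) in simp)
  then show ?thesis unfolding k1 k3 .
qed



definition nx :: "nat \<Rightarrow> nat \<Rightarrow> nat" where "nx m u = (u + 1) mod m"
definition pv :: "nat \<Rightarrow> nat \<Rightarrow> nat" where "pv m u = (u + (m - 1)) mod m"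

lemma nx_lt: "0 < m \<Longrightarrow> nx m u < m" by (simp add: nx_def)
lemma pv_lt: "0 < m \<Longrightarrow> pv m u < m" by (simp add: pv_def)

lemma nx_alt: "u < m \<Longrightarrow> nx m u = (if u + 1 = m then 0 else u + 1)"
  by (auto simp: nx_def)
lemma pv_alt: "u < m \<Longrightarrow> pv m u = (if u = 0 then m - 1 else u - 1)"
proof -
  assume u: "u < m"
  show ?thesis
  proof (cases "u = 0")
    case True then show ?thesis using u by (simp add: pv_def)
  next
    case False
    have e: "u + (m - 1) = (u - 1) + m" using u False by simp
    have "(u + (m - 1)) mod m = u - 1" unfolding e using u by simp
    then show ?thesis using False u by (simp add: pv_def)
  qed
qed

lemma nx_ne_pv: "3 \<le> m \<Longrightarrow> u < m \<Longrightarrow> nx m u \<noteq> pv m u"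
  by (auto simp: nx_alt pv_alt)
lemma pv_nx: "0 < m \<Longrightarrow> u < m \<Longrightarrow> pv m (nx m u) = u"
  by (auto simp: nx_alt pv_alt nx_lt)
lemma nx_pv: "0 < m \<Longrightarrow> u < m \<Longrightarrow> nx m (pv m u) = u"
  by (auto simp: nx_alt pv_alt pv_lt)
lemma nx_neq: "2 \<le> m \<Longrightarrow> u < m \<Longrightarrow> nx m u \<noteq> u"
  by (auto simp: nx_alt)
lemma pv_neq: "2 \<le> m \<Longrightarrow> u < m \<Longrightarrow> pv m u \<noteq> u"
  by (auto simp: pv_alt)

lemma cycle_w_eq:
  assumes "u < m" "u' < m"
  shows "cycle_w m u u' = (if u' = nx m u \<or> u' = pv m u then 1 / (2 * real m) else 0)"
proof -
  have "u = nx m u' \<longleftrightarrow> u' = pv m u" using assms by (auto simp: nx_alt pv_alt)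
  then have "(u' = (u + 1) mod m \<or> u = (u' + 1) mod m) \<longleftrightarrow> (u' = nx m u \<or> u' = pv m u)"
    by (simp add: nx_def)
  then show ?thesis using assms by (simp add: cycle_w_def)
qed

lemma cycle_w_out: "\<not> (u < m \<and> u' < m) \<Longrightarrow> cycle_w m u u' = 0"
  by (auto simp: cycle_w_def)

lemma cycle_sum_set:
  assumes "3 \<le> m" "u < m" "S \<subseteq> {0..<m}"
  shows "(\<Sum>u'\<in>S. cycle_w m u u') = (of_bool (nx m u \<in> S) + of_bool (pv m u \<in> S)) / (2 * real m)"
proof -
  have fin: "finite S" using assms finite_subset by blast
  have "(\<Sum>u'\<in>S. cycle_w m u u') = (\<Sum>u'\<in>S. (if u' = nx m u then 1 / (2 * real m) else 0)
        + (if u' = pv m u then 1 / (2 * real m) else 0))"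
    apply (rule sum.cong, simp)
    using assms nx_ne_pv[of m u] by (auto simp: cycle_w_eq subset_iff)
  also have "\<dots> = (of_bool (nx m u \<in> S) + of_bool (pv m u \<in> S)) / (2 * real m)"
    using fin by (simp add: sum.distrib add_divide_distrib)
  finally show ?thesis .
qed

lemma wdeg_cycle:
  assumes "3 \<le> m" "u < m"
  shows "wdeg {0..<m} (cycle_w m) u = 1 / real m"
  using cycle_sum_set[OF assms, of "{0..<m}"] assms nx_lt[of m u] pv_lt[of m u]
  by (simp add: wdeg_def)

lemma weight_fun_cycle:
  assumes "3 \<le> m"
  shows "weight_fun {0..<m} (cycle_w m)"
proof -
  have "(\<Sum>x\<in>{0..<m}. \<Sum>y\<in>{0..<m}. cycle_w m x y) = (\<Sum>x\<in>{0..<m}. 1 / real m)"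
    using wdeg_cycle[OF assms] by (simp add: wdeg_def)
  also have "\<dots> = 1" using assms by simp
  finally show ?thesis
    unfolding weight_fun_def by (auto simp: cycle_w_def)
qed

lemma sum_of_bool_mult:
  assumes "finite A"
  shows "(\<Sum>x\<in>A. of_bool (P x) * (c::real)) = real (card {x\<in>A. P x}) * c"
proof -
  have "(\<Sum>x\<in>A. of_bool (P x) * c) = (\<Sum>x\<in>A. if P x then c else 0)"
    by (rule sum.cong) auto
  also have "\<dots> = (\<Sum>x\<in>{x\<in>A. P x}. c)" using sum.inter_filter[OF assms, of "\<lambda>_. c" P] by simp
  finally show ?thesis by simp
qed

lemma path_w_eq:
  assumes "v < n'" "v' < n'"
  shows "path_w n' v v' = (if v' = v + 1 \<or> v = v' + 1 then 1 / (2 * real (n' - 1)) else 0)"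
  using assms by (auto simp: path_w_def of_nat_diff)

lemma path_w_out: "\<not> (v < n' \<and> v' < n') \<Longrightarrow> path_w n' v v' = 0"
  by (auto simp: path_w_def)

lemma path_sum_set:
  assumes "2 \<le> n'" "v < n'" "S \<subseteq> {0..<n'}"
  shows "(\<Sum>v'\<in>S. path_w n' v v') =
     (of_bool (v + 1 < n' \<and> v + 1 \<in> S) + of_bool (0 < v \<and> v - 1 \<in> S)) / (2 * real (n' - 1))"
proof -
  have fin: "finite S" using assms finite_subset by blast
  have "(\<Sum>v'\<in>S. path_w n' v v') = (\<Sum>v'\<in>S. (if v' = v + 1 then 1 / (2 * real (n' - 1)) else 0)
        + of_bool (0 < v) * (if v' = v - 1 then 1 / (2 * real (n' - 1)) else 0))"
    apply (rule sum.cong, simp)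
    using assms by (auto simp: path_w_eq subset_iff)
  also have "\<dots> = (of_bool (v + 1 \<in> S) + of_bool (0 < v \<and> v - 1 \<in> S)) / (2 * real (n' - 1))"
    using fin by (simp add: sum.distrib add_divide_distrib sum_distrib_left[symmetric])
  also have "of_bool (v + 1 \<in> S) = (of_bool (v + 1 < n' \<and> v + 1 \<in> S) :: real)"
    using assms by auto
  finally show ?thesis .
qed

lemma wdeg_path:
  assumes "2 \<le> n'" "v < n'"
  shows "wdeg {0..<n'} (path_w n') v =
     (of_bool (v + 1 < n') + of_bool (0 < v)) / (2 * real (n' - 1))"
proof -
  have "(0 < v \<and> v - 1 \<in> {0..<n'}) = (0 < v)" using assms by auto
  then show ?thesis using path_sum_set[OF assms, of "{0..<n'}"] assms by (simp add: wdeg_def)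
qed

lemma weight_fun_path:
  assumes "2 \<le> n'"
  shows "weight_fun {0..<n'} (path_w n')"
proof -
  let ?c = "1 / (2 * real (n' - 1))"
  have "(\<Sum>x\<in>{0..<n'}. \<Sum>y\<in>{0..<n'}. path_w n' x y)
      = (\<Sum>x\<in>{0..<n'}. of_bool (x + 1 < n') * ?c + of_bool (0 < x) * ?c)"
    using wdeg_path[OF assms] by (simp add: wdeg_def add_divide_distrib)
  also have "\<dots> = (\<Sum>x\<in>{0..<n'}. of_bool (x + 1 < n') * ?c) + (\<Sum>x\<in>{0..<n'}. of_bool (0 < x) * ?c)"
    by (simp add: sum.distrib)
  also have "(\<Sum>x\<in>{0..<n'}. of_bool (x + 1 < n') * ?c) = real (card {x\<in>{0..<n'}. x + 1 < n'}) * ?c"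
    by (rule sum_of_bool_mult) simp
  also have "{x\<in>{0..<n'}. x + 1 < n'} = {0..<n'-1}" by auto
  also have "(\<Sum>x\<in>{0..<n'}. of_bool (0 < x) * ?c) = real (card {x\<in>{0..<n'}. 0 < x}) * ?c"
    by (rule sum_of_bool_mult) simp
  also have "{x\<in>{0..<n'}. 0 < x} = {1..<n'}" by auto
  also have "real (card {0..<n'-1}) * ?c + real (card {1..<n'}) * ?c = 1"
  proof -
    have "real (n' - 1) > 0" using assms by simp
    then have "real (n' - 1) * ?c = 1/2" by (simp add: field_simps)
    then show ?thesis by simp
  qed
  finally show ?thesis
    unfolding weight_fun_def by (auto simp: path_w_def)
qed



lemma weight_funD:
  assumes "weight_fun U \<alpha>"
  shows "finite U" "\<And>x y. 0 \<le> \<alpha> x y" "\<And>x y. \<alpha> x y = \<alpha> y x"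
    "\<And>x y. x \<notin> U \<Longrightarrow> \<alpha> x y = 0" "\<And>x y. y \<notin> U \<Longrightarrow> \<alpha> x y = 0"
    "(\<Sum>x\<in>U. \<Sum>y\<in>U. \<alpha> x y) = 1"
  using assms unfolding weight_fun_def by auto

lemma wdeg_nonneg: "weight_fun U \<alpha> \<Longrightarrow> 0 \<le> wdeg U \<alpha> u"
  unfolding wdeg_def by (rule sum_nonneg) (simp add: weight_funD)

lemma alpha_le_wdeg: "weight_fun U \<alpha> \<Longrightarrow> u' \<in> U \<Longrightarrow> \<alpha> u u' \<le> wdeg U \<alpha> u"
  unfolding wdeg_def by (rule member_le_sum) (auto simp: weight_funD)

lemma wdeg_zero_alpha: "weight_fun U \<alpha> \<Longrightarrow> wdeg U \<alpha> u = 0 \<Longrightarrow> \<alpha> u u' = 0"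
  by (metis alpha_le_wdeg antisym weight_funD(2,5))

lemma sum_wdeg: "weight_fun U \<alpha> \<Longrightarrow> sum (wdeg U \<alpha>) U = 1"
  unfolding wdeg_def using weight_funD(6) by blast

lemma factor_facts:
  assumes wU: "weight_fun U \<alpha>" and wW: "weight_fun W \<kappa>" and im: "\<phi> ` U = W"
    and deg: "\<forall>v\<in>W. wdeg W \<kappa> v = (\<Sum>u\<in>{u\<in>U. \<phi> u = v}. wdeg U \<alpha> u)"
    and loc: "\<forall>v\<in>W. \<forall>v'\<in>W. \<forall>u\<in>U. \<phi> u = v \<longrightarrow>
          wdeg W \<kappa> v * (\<Sum>u'\<in>{u'\<in>U. \<phi> u' = v'}. \<alpha> u u') = wdeg U \<alpha> u * \<kappa> v v'"
  shows "\<And>u. u \<in> U \<Longrightarrow> wdeg U \<alpha> u \<le> wdeg W \<kappa> (\<phi> u)"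
    and KA: "\<And>u w'. u \<in> U \<Longrightarrow> w' \<in> W \<Longrightarrow>
        (\<Sum>u'\<in>{u'\<in>U. \<phi> u' = w'}. \<alpha> u u') = wdeg U \<alpha> u * \<kappa> (\<phi> u) w' / wdeg W \<kappa> (\<phi> u)"
    and "\<And>u u'. u \<in> U \<Longrightarrow> u' \<in> U \<Longrightarrow> \<kappa> (\<phi> u) (\<phi> u') = 0 \<Longrightarrow> \<alpha> u u' = 0"
    and "\<And>w. w \<in> W \<Longrightarrow> 0 < wdeg W \<kappa> w \<Longrightarrow> \<exists>u\<in>U. \<phi> u = w \<and> 0 < wdeg U \<alpha> u"
proof -
  have finU: "finite U" using wU weight_funD by blast
  show le: "wdeg U \<alpha> u \<le> wdeg W \<kappa> (\<phi> u)" if u: "u \<in> U" for u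
  proof -
    have "wdeg U \<alpha> u \<le> (\<Sum>u\<in>{u'\<in>U. \<phi> u' = \<phi> u}. wdeg U \<alpha> u)"
      by (rule member_le_sum) (use u finU wdeg_nonneg[OF wU] in auto)
    also have "\<dots> = wdeg W \<kappa> (\<phi> u)" using deg im u by auto
    finally show ?thesis .
  qed
  show KA: "(\<Sum>u'\<in>{u'\<in>U. \<phi> u' = w'}. \<alpha> u u') = wdeg U \<alpha> u * \<kappa> (\<phi> u) w' / wdeg W \<kappa> (\<phi> u)"
    if u: "u \<in> U" and w': "w' \<in> W" for u w'
  proof (cases "wdeg W \<kappa> (\<phi> u) = 0")
    case True
    then have "wdeg U \<alpha> u = 0" using le[OF u] wdeg_nonneg[OF wU, of u] by simp
    then have "\<alpha> u u' = 0" for u' using wdeg_zero_alpha[OF wU] by blast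
    then show ?thesis using True by simp
  next
    case False
    have "wdeg W \<kappa> (\<phi> u) * (\<Sum>u'\<in>{u'\<in>U. \<phi> u' = w'}. \<alpha> u u') = wdeg U \<alpha> u * \<kappa> (\<phi> u) w'"
      using loc u w' im by auto
    then show ?thesis using False by (simp add: field_simps)
  qed
  show "\<alpha> u u' = 0" if u: "u \<in> U" and u': "u' \<in> U" and k: "\<kappa> (\<phi> u) (\<phi> u') = 0" for u u'
  proof -
    have w': "\<phi> u' \<in> W" using im u' by auto
    have "(\<Sum>x\<in>{x\<in>U. \<phi> x = \<phi> u'}. \<alpha> u x) = 0" using KA[OF u w'] k by simp
    moreover have "finite {x\<in>U. \<phi> x = \<phi> u'}" using finU by simp
    ultimately have "\<forall>x\<in>{x\<in>U. \<phi> x = \<phi> u'}. \<alpha> u x = 0"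
      using sum_nonneg_eq_0_iff[of "{x\<in>U. \<phi> x = \<phi> u'}" "\<alpha> u"] weight_funD(2)[OF wU] by blast
    then show ?thesis using u' by auto
  qed
  show "\<exists>u\<in>U. \<phi> u = w \<and> 0 < wdeg U \<alpha> u" if w: "w \<in> W" and pos: "0 < wdeg W \<kappa> w" for w
  proof (rule ccontr)
    assume "\<not> ?thesis"
    then have "\<forall>u\<in>{u\<in>U. \<phi> u = w}. wdeg U \<alpha> u = 0"
      using wdeg_nonneg[OF wU] by (metis (mono_tags, lifting) mem_Collect_eq order_less_le)
    then have "(\<Sum>u\<in>{u\<in>U. \<phi> u = w}. wdeg U \<alpha> u) = 0" by simp
    then show False using deg w pos by auto
  qed
qed

lemma sum_filter_eq: "finite A \<Longrightarrow> (\<Sum>x\<in>A. if P x then f x else 0) = (\<Sum>x\<in>{x\<in>A. P x}. f x)"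
  by (simp add: sum.inter_filter)

lemma rel_indep_joining:
  fixes U :: "'a set" and V :: "'b set" and W :: "'c set"
  assumes wU: "weight_fun U \<alpha>" and wV: "weight_fun V \<beta>" and wW: "weight_fun W \<kappa>"
    and fU: "graph_factor W \<kappa> U \<alpha>" and fV: "graph_factor W \<kappa> V \<beta>"
    and nt: "nontrivial_graph W \<kappa>"
  shows "\<exists>\<gamma>. weight_joining U \<alpha> V \<beta> \<gamma> \<and>
           (\<exists>u\<in>U. \<exists>v\<in>V. wdeg (U \<times> V) \<gamma> (u, v) \<noteq> wdeg U \<alpha> u * wdeg V \<beta> v)"
proof -
  define p where "p = wdeg U \<alpha>"
  define q where "q = wdeg V \<beta>"
  define s where "s = wdeg W \<kappa>"
  obtain \<phi> where \<phi>: "\<phi> ` U = W" "\<forall>v\<in>W. s v = (\<Sum>u\<in>{u\<in>U. \<phi> u = v}. p u)"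
    "\<forall>v\<in>W. \<forall>v'\<in>W. \<forall>u\<in>U. \<phi> u = v \<longrightarrow> s v * (\<Sum>u'\<in>{u'\<in>U. \<phi> u' = v'}. \<alpha> u u') = p u * \<kappa> v v'"
    using fU unfolding graph_factor_def p_def s_def by blast
  obtain \<psi> where \<psi>: "\<psi> ` V = W" "\<forall>v\<in>W. s v = (\<Sum>u\<in>{u\<in>V. \<psi> u = v}. q u)"
    "\<forall>v\<in>W. \<forall>v'\<in>W. \<forall>u\<in>V. \<psi> u = v \<longrightarrow> s v * (\<Sum>u'\<in>{u'\<in>V. \<psi> u' = v'}. \<beta> u u') = q u * \<kappa> v v'"
    using fV unfolding graph_factor_def q_def s_def by blast
  note FU = factor_facts[OF wU wW \<phi>(1) \<phi>(2-3)[unfolded p_def s_def], folded p_def s_def]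
  note FV = factor_facts[OF wV wW \<psi>(1) \<psi>(2-3)[unfolded q_def s_def], folded q_def s_def]
  have finU: "finite U" and finV: "finite V" using wU wV weight_funD by blast+
  have pnn: "0 \<le> p u" for u unfolding p_def using wdeg_nonneg[OF wU] .
  have qnn: "0 \<le> q v" for v unfolding q_def using wdeg_nonneg[OF wV] .
  have knn: "0 \<le> \<kappa> x y" for x y using weight_funD(2)[OF wW] .
  define \<gamma> where "\<gamma> = (\<lambda>(u, v) (u', v'). if u \<in> U \<and> v \<in> V \<and> u' \<in> U \<and> v' \<in> V \<and> \<phi> u = \<psi> v \<and> \<phi> u' = \<psi> v'
      then \<alpha> u u' * \<beta> v v' / \<kappa> (\<phi> u) (\<phi> u') else 0)"
  define R where "R = (\<lambda>u v. if \<phi> u = \<psi> v then p u * q v / s (\<phi> u) else 0)"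
  have RS1: "(\<Sum>v'\<in>V. \<gamma> (u, v) (u', v')) = (if \<phi> u = \<psi> v then \<alpha> u u' * q v / s (\<phi> u) else 0)"
    if u: "u \<in> U" and v: "v \<in> V" and u': "u' \<in> U" for u v u'
  proof (cases "\<phi> u = \<psi> v")
    case False then show ?thesis by (simp add: \<gamma>_def)
  next
    case True
    have w': "\<phi> u' \<in> W" using \<phi>(1) u' by auto
    have "(\<Sum>v'\<in>V. \<gamma> (u, v) (u', v')) = (\<Sum>v'\<in>V. if \<psi> v' = \<phi> u' then \<alpha> u u' / \<kappa> (\<phi> u) (\<phi> u') * \<beta> v v' else 0)"
      by (rule sum.cong) (use u v u' True in \<open>auto simp: \<gamma>_def\<close>)
    also have "\<dots> = (\<Sum>v'\<in>{v'\<in>V. \<psi> v' = \<phi> u'}. \<alpha> u u' / \<kappa> (\<phi> u) (\<phi> u') * \<beta> v v')"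
      using finV by (rule sum_filter_eq)
    also have "\<dots> = \<alpha> u u' / \<kappa> (\<phi> u) (\<phi> u') * (\<Sum>v'\<in>{v'\<in>V. \<psi> v' = \<phi> u'}. \<beta> v v')"
      by (simp add: sum_distrib_left)
    also have "\<dots> = \<alpha> u u' / \<kappa> (\<phi> u) (\<phi> u') * (q v * \<kappa> (\<phi> u) (\<phi> u') / s (\<phi> u))"
      using FV(2)[OF v w'] True by simp
    also have "\<dots> = \<alpha> u u' * q v / s (\<phi> u)"
    proof (cases "\<kappa> (\<phi> u) (\<phi> u') = 0")
      case True then show ?thesis using FU(3)[OF u u'] by simp
    next
      case False then show ?thesis by (simp add: field_simps)
    qed
    finally show ?thesis using True by simp
  qed
  have RS2: "(\<Sum>u'\<in>U. \<gamma> (u, v) (u', v')) = (if \<phi> u = \<psi> v then p u * \<beta> v v' / s (\<phi> u) else 0)"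
    if u: "u \<in> U" and v: "v \<in> V" and v': "v' \<in> V" for u v v'
  proof (cases "\<phi> u = \<psi> v")
    case False then show ?thesis by (simp add: \<gamma>_def)
  next
    case True
    have w': "\<psi> v' \<in> W" using \<psi>(1) v' by auto
    have "(\<Sum>u'\<in>U. \<gamma> (u, v) (u', v')) = (\<Sum>u'\<in>U. if \<phi> u' = \<psi> v' then \<beta> v v' / \<kappa> (\<psi> v) (\<psi> v') * \<alpha> u u' else 0)"
      by (rule sum.cong) (use u v v' True in \<open>auto simp: \<gamma>_def\<close>)
    also have "\<dots> = (\<Sum>u'\<in>{u'\<in>U. \<phi> u' = \<psi> v'}. \<beta> v v' / \<kappa> (\<psi> v) (\<psi> v') * \<alpha> u u')"
      using finU by (rule sum_filter_eq)
    also have "\<dots> = \<beta> v v' / \<kappa> (\<psi> v) (\<psi> v') * (\<Sum>u'\<in>{u'\<in>U. \<phi> u' = \<psi> v'}. \<alpha> u u')"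
      by (simp add: sum_distrib_left)
    also have "\<dots> = \<beta> v v' / \<kappa> (\<psi> v) (\<psi> v') * (p u * \<kappa> (\<psi> v) (\<psi> v') / s (\<psi> v))"
      using FU(2)[OF u w'] True by simp
    also have "\<dots> = p u * \<beta> v v' / s (\<phi> u)"
    proof (cases "\<kappa> (\<psi> v) (\<psi> v') = 0")
      case True then show ?thesis using FV(3)[OF v v'] by simp
    next
      case False then show ?thesis using \<open>\<phi> u = \<psi> v\<close> by (simp add: field_simps)
    qed
    finally show ?thesis using True by simp
  qed
  have Rdeg: "wdeg (U \<times> V) \<gamma> (u, v) = R u v" if u: "u \<in> U" and v: "v \<in> V" for u v
  proof -
    have "wdeg (U \<times> V) \<gamma> (u, v) = (\<Sum>u'\<in>U. \<Sum>v'\<in>V. \<gamma> (u, v) (u', v'))"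
      unfolding wdeg_def by (simp add: sum.cartesian_product)
    also have "\<dots> = (\<Sum>u'\<in>U. if \<phi> u = \<psi> v then \<alpha> u u' * q v / s (\<phi> u) else 0)"
      using RS1 u v by simp
    also have "\<dots> = (if \<phi> u = \<psi> v then p u * q v / s (\<phi> u) else 0)"
      by (simp add: p_def wdeg_def sum_distrib_right sum_divide_distrib)
    finally show ?thesis by (simp add: R_def)
  qed
  have M1: "(\<Sum>v\<in>V. R u v) = p u" if u: "u \<in> U" for u
  proof -
    have w: "\<phi> u \<in> W" using \<phi>(1) u by auto
    have "(\<Sum>v\<in>V. R u v) = (\<Sum>v\<in>{v\<in>V. \<psi> v = \<phi> u}. p u / s (\<phi> u) * q v)"
    proof -
      have "(\<Sum>v\<in>V. R u v) = (\<Sum>v\<in>V. if \<psi> v = \<phi> u then p u / s (\<phi> u) * q v else 0)"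
        by (rule sum.cong) (auto simp: R_def)
      also have "\<dots> = (\<Sum>v\<in>{v\<in>V. \<psi> v = \<phi> u}. p u / s (\<phi> u) * q v)"
        by (rule sum_filter_eq[OF finV])
      finally show ?thesis .
    qed
    also have "\<dots> = p u / s (\<phi> u) * s (\<phi> u)"
      using \<psi>(2) w by (simp add: sum_distrib_left)
    also have "\<dots> = p u"
      using FU(1)[OF u] pnn[of u] by (cases "s (\<phi> u) = 0") auto
    finally show ?thesis .
  qed
  have M2: "(\<Sum>u\<in>U. R u v) = q v" if v: "v \<in> V" for v
  proof -
    have w: "\<psi> v \<in> W" using \<psi>(1) v by auto
    have "(\<Sum>u\<in>U. R u v) = (\<Sum>u\<in>{u\<in>U. \<phi> u = \<psi> v}. q v / s (\<psi> v) * p u)"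
    proof -
      have "(\<Sum>u\<in>U. R u v) = (\<Sum>u\<in>U. if \<phi> u = \<psi> v then q v / s (\<psi> v) * p u else 0)"
        by (rule sum.cong) (auto simp: R_def)
      also have "\<dots> = (\<Sum>u\<in>{u\<in>U. \<phi> u = \<psi> v}. q v / s (\<psi> v) * p u)"
        by (rule sum_filter_eq[OF finU])
      finally show ?thesis .
    qed
    also have "\<dots> = q v / s (\<psi> v) * s (\<psi> v)"
      using \<phi>(2) w by (simp add: sum_distrib_left)
    also have "\<dots> = q v"
      using FV(1)[OF v] qnn[of v] by (cases "s (\<psi> v) = 0") auto
    finally show ?thesis .
  qed
  have J: "weight_joining U \<alpha> V \<beta> \<gamma>"
    unfolding weight_joining_def
  proof (intro conjI ballI)
    show "weight_fun (U \<times> V) \<gamma>"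
      unfolding weight_fun_def
    proof (intro conjI allI impI)
      show "finite (U \<times> V)" using finU finV by simp
      show "0 \<le> \<gamma> x y" for x y
        using weight_funD(2)[OF wU] weight_funD(2)[OF wV] knn
        by (auto simp: \<gamma>_def split: prod.splits)
      show "\<gamma> x y = \<gamma> y x" for x y
        using weight_funD(3)[OF wU] weight_funD(3)[OF wV] weight_funD(3)[OF wW]
        by (auto simp: \<gamma>_def split: prod.splits)
      show "\<gamma> x y = 0" if "x \<notin> U \<times> V \<or> y \<notin> U \<times> V" for x y
        using that by (auto simp: \<gamma>_def split: prod.splits)
      have "(\<Sum>x\<in>U \<times> V. \<Sum>y\<in>U \<times> V. \<gamma> x y) = (\<Sum>x\<in>U \<times> V. wdeg (U \<times> V) \<gamma> x)"
        by (simp add: wdeg_def)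
      also have "\<dots> = (\<Sum>u\<in>U. \<Sum>v\<in>V. R u v)"
      proof -
        have "(\<Sum>x\<in>U \<times> V. wdeg (U \<times> V) \<gamma> x) = (\<Sum>u\<in>U. \<Sum>v\<in>V. wdeg (U \<times> V) \<gamma> (u, v))"
          by (simp add: sum.cartesian_product)
        also have "\<dots> = (\<Sum>u\<in>U. \<Sum>v\<in>V. R u v)"
          by (rule sum.cong[OF refl], rule sum.cong[OF refl]) (simp add: Rdeg)
        finally show ?thesis .
      qed
      also have "\<dots> = (\<Sum>u\<in>U. p u)" using M1 by simp
      also have "\<dots> = 1" unfolding p_def by (rule sum_wdeg[OF wU])
      finally show "(\<Sum>x\<in>U \<times> V. \<Sum>y\<in>U \<times> V. \<gamma> x y) = 1" .
    qed
    show "(\<Sum>v\<in>V. wdeg (U \<times> V) \<gamma> (u, v)) = wdeg U \<alpha> u" if "u \<in> U" for u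
      using M1[OF that] Rdeg[OF that] by (simp add: p_def)
    show "(\<Sum>u\<in>U. wdeg (U \<times> V) \<gamma> (u, v)) = wdeg V \<beta> v" if "v \<in> V" for v
      using M2[OF that] Rdeg[OF _ that] by (simp add: q_def)
    show "wdeg U \<alpha> u * (\<Sum>v'\<in>V. \<gamma> (u, v) (u', v')) = \<alpha> u u' * wdeg (U \<times> V) \<gamma> (u, v)"
      if "u \<in> U" "u' \<in> U" "v \<in> V" for u u' v
      using RS1[of u v u'] Rdeg[of u v] that by (simp add: R_def p_def[symmetric])
    show "wdeg V \<beta> v * (\<Sum>u'\<in>U. \<gamma> (u, v) (u', v')) = \<beta> v v' * wdeg (U \<times> V) \<gamma> (u, v)"
      if "u \<in> U" "v \<in> V" "v' \<in> V" for u v v'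
      using RS2[of u v v'] Rdeg[of u v] that by (simp add: R_def q_def[symmetric])
  qed
  obtain w1 w2 where w: "w1 \<in> W" "w2 \<in> W" "w1 \<noteq> w2" "0 < s w1" "0 < s w2"
    using nt unfolding nontrivial_graph_def s_def by blast
  obtain u where u: "u \<in> U" "\<phi> u = w1" "0 < p u" using FU(4)[OF w(1) w(4)] by blast
  obtain v where v: "v \<in> V" "\<psi> v = w2" "0 < q v" using FV(4)[OF w(2) w(5)] by blast
  have "wdeg (U \<times> V) \<gamma> (u, v) = 0" using Rdeg[OF u(1) v(1)] u v w by (simp add: R_def)
  moreover have "0 < p u * q v" using u v by simp
  ultimately have "wdeg (U \<times> V) \<gamma> (u, v) \<noteq> wdeg U \<alpha> u * wdeg V \<beta> v" unfolding p_def q_def by linarith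
  then show ?thesis using J u(1) v(1) by blast
qed

lemma tensor_wdeg:
  assumes "weight_fun U \<alpha>" "weight_fun V \<beta>" "u \<in> U" "v \<in> V"
  shows "wdeg (U \<times> V) (tensor_weight \<alpha> \<beta>) (u, v) = wdeg U \<alpha> u * wdeg V \<beta> v"
  unfolding wdeg_def tensor_weight_def
  by (simp add: sum.cartesian_product[symmetric] sum_product)

lemma cf_not_disjoint:
  fixes U :: "'a set" and V :: "'b set"
  assumes wU: "weight_fun U \<alpha>" and wV: "weight_fun V \<beta>"
    and cf: "has_nontrivial_common_factor U \<alpha> V \<beta>"
  shows "\<not> weakly_disjoint U \<alpha> V \<beta>" and "\<not> strongly_disjoint U \<alpha> V \<beta>"
proof -
  obtain W :: "nat set" and \<kappa> where "weight_fun W \<kappa>" "nontrivial_graph W \<kappa>"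
     "graph_factor W \<kappa> U \<alpha>" "graph_factor W \<kappa> V \<beta>"
    using cf unfolding has_nontrivial_common_factor_def by blast
  then obtain \<gamma> u v where J: "weight_joining U \<alpha> V \<beta> \<gamma>" and uv: "u \<in> U" "v \<in> V"
    "wdeg (U \<times> V) \<gamma> (u, v) \<noteq> wdeg U \<alpha> u * wdeg V \<beta> v"
    using rel_indep_joining[OF wU wV] by blast
  show "\<not> weakly_disjoint U \<alpha> V \<beta>" using J uv unfolding weakly_disjoint_def by blast
  show "\<not> strongly_disjoint U \<alpha> V \<beta>"
  proof
    assume "strongly_disjoint U \<alpha> V \<beta>"
    then have "\<gamma> = tensor_weight \<alpha> \<beta>" using J unfolding strongly_disjoint_def by blast
    then show False using uv tensor_wdeg[OF wU wV uv(1,2)] by simp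
  qed
qed



lemma weight_joiningD:
  assumes "weight_joining U \<alpha> V \<beta> \<gamma>"
  shows "weight_fun (U \<times> V) \<gamma>"
    "\<And>u. u \<in> U \<Longrightarrow> (\<Sum>v\<in>V. wdeg (U \<times> V) \<gamma> (u, v)) = wdeg U \<alpha> u"
    "\<And>v. v \<in> V \<Longrightarrow> (\<Sum>u\<in>U. wdeg (U \<times> V) \<gamma> (u, v)) = wdeg V \<beta> v"
    "\<And>u u' v. u \<in> U \<Longrightarrow> u' \<in> U \<Longrightarrow> v \<in> V \<Longrightarrow>
          wdeg U \<alpha> u * (\<Sum>v'\<in>V. \<gamma> (u, v) (u', v')) = \<alpha> u u' * wdeg (U \<times> V) \<gamma> (u, v)"
    "\<And>u v v'. u \<in> U \<Longrightarrow> v \<in> V \<Longrightarrow> v' \<in> V \<Longrightarrow>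
          wdeg V \<beta> v * (\<Sum>u'\<in>U. \<gamma> (u, v) (u', v')) = \<beta> v v' * wdeg (U \<times> V) \<gamma> (u, v)"
  using assms unfolding weight_joining_def by blast+

lemma joining_supp:
  assumes J: "weight_joining U \<alpha> V \<beta> \<gamma>"
    and u: "u \<in> U" and v: "v \<in> V" and u': "u' \<in> U" and v': "v' \<in> V"
    and pu: "0 < wdeg U \<alpha> u" and qv: "0 < wdeg V \<beta> v"
    and nz: "\<gamma> (u, v) (u', v') \<noteq> 0"
  shows "\<alpha> u u' \<noteq> 0 \<and> \<beta> v v' \<noteq> 0"
proof -
  have wf: "weight_fun (U \<times> V) \<gamma>" using weight_joiningD(1)[OF J] .
  have fin: "finite U" "finite V"
    using finite_cartesian_productD1[OF weight_funD(1)[OF wf]] finite_cartesian_productD2[OF weight_funD(1)[OF wf]] u v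
    by blast+
  have nn: "0 \<le> \<gamma> x y" for x y using weight_funD(2)[OF wf] .
  show ?thesis
  proof (intro conjI notI)
    assume a: "\<alpha> u u' = 0"
    have "wdeg U \<alpha> u * (\<Sum>x\<in>V. \<gamma> (u, v) (u', x)) = 0" using weight_joiningD(4)[OF J u u' v] a by simp
    then have "(\<Sum>x\<in>V. \<gamma> (u, v) (u', x)) = 0" using pu by simp
    then have "\<forall>x\<in>V. \<gamma> (u, v) (u', x) = 0" using sum_nonneg_eq_0_iff[OF fin(2), of "\<lambda>x. \<gamma> (u, v) (u', x)"] nn by simp
    then show False using nz v' by blast
  next
    assume a: "\<beta> v v' = 0"
    have "wdeg V \<beta> v * (\<Sum>x\<in>U. \<gamma> (u, v) (x, v')) = 0" using weight_joiningD(5)[OF J u v v'] a by simp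
    then have "(\<Sum>x\<in>U. \<gamma> (u, v) (x, v')) = 0" using qv by simp
    then have "\<forall>x\<in>U. \<gamma> (u, v) (x, v') = 0" using sum_nonneg_eq_0_iff[OF fin(1), of "\<lambda>x. \<gamma> (u, v) (x, v')"] nn by simp
    then show False using nz u' by blast
  qed
qed

lemma joining_colsum1:
  assumes J: "weight_joining U \<alpha> V \<beta> \<gamma>" and u: "u \<in> U" and v: "v \<in> V" and u': "u' \<in> U"
    and pu: "0 < wdeg U \<alpha> u"
  shows "(\<Sum>x\<in>V. \<gamma> (u, v) (u', x)) = \<alpha> u u' / wdeg U \<alpha> u * wdeg (U \<times> V) \<gamma> (u, v)"
  using weight_joiningD(4)[OF J u u' v] pu by (simp add: field_simps)

lemma joining_colsum2:
  assumes J: "weight_joining U \<alpha> V \<beta> \<gamma>" and u: "u \<in> U" and v: "v \<in> V" and v': "v' \<in> V"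
    and qv: "0 < wdeg V \<beta> v"
  shows "(\<Sum>x\<in>U. \<gamma> (u, v) (x, v')) = \<beta> v v' / wdeg V \<beta> v * wdeg (U \<times> V) \<gamma> (u, v)"
  using weight_joiningD(5)[OF J u v v'] qv by (simp add: field_simps)

lemma cyc_first_sum:
  assumes J: "weight_joining {0..<m} (cycle_w m) V \<beta> \<gamma>" and m: "3 \<le> m"
    and u: "u < m" and v: "v \<in> V" and u': "u' = nx m u \<or> u' = pv m u"
  shows "(\<Sum>x\<in>V. \<gamma> (u, v) (u', x)) = wdeg ({0..<m} \<times> V) \<gamma> (u, v) / 2"
proof -
  have u'l: "u' < m" using u' nx_lt[of m u] pv_lt[of m u] m by auto
  have "cycle_w m u u' = 1 / (2 * real m)" using cycle_w_eq[OF u u'l] u' by auto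
  moreover have "wdeg {0..<m} (cycle_w m) u = 1 / real m" using wdeg_cycle[OF m u] .
  moreover have "(\<Sum>x\<in>V. \<gamma> (u, v) (u', x)) = cycle_w m u u' / wdeg {0..<m} (cycle_w m) u * wdeg ({0..<m} \<times> V) \<gamma> (u, v)"
    by (rule joining_colsum1[OF J]) (use u u'l v m \<open>wdeg {0..<m} (cycle_w m) u = 1 / real m\<close> in auto)
  ultimately show ?thesis using m by simp
qed

lemma cyc_first_supp:
  assumes J: "weight_joining {0..<m} (cycle_w m) V \<beta> \<gamma>" and m: "3 \<le> m"
    and u: "u < m" and u': "u' < m" and v: "v \<in> V" and v': "v' \<in> V"
    and qv: "0 < wdeg V \<beta> v"
    and nz: "\<gamma> (u, v) (u', v') \<noteq> 0"
  shows "(u' = nx m u \<or> u' = pv m u) \<and> \<beta> v v' \<noteq> 0"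
proof -
  have "0 < wdeg {0..<m} (cycle_w m) u" using wdeg_cycle[OF m u] m by simp
  then have "cycle_w m u u' \<noteq> 0 \<and> \<beta> v v' \<noteq> 0"
    by (intro joining_supp[OF J _ v _ v' _ qv nz]) (use u u' in auto)
  then show ?thesis using cycle_w_eq[OF u u'] by (auto split: if_splits)
qed



lemma cyc_second_sum:
  assumes J: "weight_joining U \<alpha> {0..<n} (cycle_w n) \<gamma>" and n: "3 \<le> n"
    and u: "u \<in> U" and v: "v < n" and v': "v' = nx n v \<or> v' = pv n v"
  shows "(\<Sum>x\<in>U. \<gamma> (u, v) (x, v')) = wdeg (U \<times> {0..<n}) \<gamma> (u, v) / 2"
proof -
  have v'l: "v' < n" using v' nx_lt[of n v] pv_lt[of n v] n by auto
  have c: "cycle_w n v v' = 1 / (2 * real n)" using cycle_w_eq[OF v v'l] v' by auto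
  have d: "wdeg {0..<n} (cycle_w n) v = 1 / real n" using wdeg_cycle[OF n v] .
  have "(\<Sum>x\<in>U. \<gamma> (u, v) (x, v')) = cycle_w n v v' / wdeg {0..<n} (cycle_w n) v * wdeg (U \<times> {0..<n}) \<gamma> (u, v)"
    by (rule joining_colsum2[OF J]) (use u v'l v n d in auto)
  then show ?thesis using c d n by simp
qed

theorem cycles_weakly_disjoint:
  assumes m: "3 \<le> m" and n: "3 \<le> n" and cop: "coprime m n"
  shows "weakly_disjoint {0..<m} (cycle_w m) {0..<n} (cycle_w n)"
  unfolding weakly_disjoint_def
proof (intro allI impI ballI)
  fix \<gamma> assume J: "weight_joining {0..<m} (cycle_w m) {0..<n} (cycle_w n) \<gamma>"
  let ?U = "{0..<m}" and ?V = "{0..<n}"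
  define r where "r = (\<lambda>u v. wdeg (?U \<times> ?V) \<gamma> (u, v))"
  define G where "G = (\<lambda>a b c d. \<gamma> (a, b) (c, d))"
  have sym: "G a b c d = G c d a b" for a b c d
    unfolding G_def using weight_funD(3)[OF weight_joiningD(1)[OF J]] by blast
  have pu: "wdeg ?U (cycle_w m) u = 1 / real m" if "u < m" for u using wdeg_cycle[OF m that] .
  have qv: "wdeg ?V (cycle_w n) v = 1 / real n" if "v < n" for v using wdeg_cycle[OF n that] .
  have m0: "0 < m" and n0: "0 < n" using m n by auto
  have E1: "G u v u' (nx n v) + G u v u' (pv n v) = r u v / 2"
    if u: "u < m" and v: "v < n" and u': "u' = nx m u \<or> u' = pv m u" for u v u'
  proof -
    have "(\<Sum>x\<in>?V. \<gamma> (u, v) (u', x)) = r u v / 2"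
      using cyc_first_sum[OF J m u _ u'] v by (simp add: r_def)
    moreover have "(\<Sum>x\<in>?V. \<gamma> (u, v) (u', x)) = \<gamma> (u, v) (u', nx n v) + \<gamma> (u, v) (u', pv n v)"
    proof (rule sum_two_points)
      show "nx n v \<in> ?V" "pv n v \<in> ?V" using nx_lt pv_lt n0 by auto
      show "nx n v \<noteq> pv n v" using nx_ne_pv[OF n v] .
      fix z assume z: "z \<in> ?V" "z \<noteq> nx n v" "z \<noteq> pv n v"
      show "\<gamma> (u, v) (u', z) = 0"
      proof (rule ccontr)
        assume nz: "\<gamma> (u, v) (u', z) \<noteq> 0"
        have "cycle_w n v z \<noteq> 0"
          using cyc_first_supp[OF J m u _ _ _ _ nz] u' nx_lt pv_lt m0 v z qv[OF v] n0 by auto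
        then show False using cycle_w_eq[of v n z] v z by (auto split: if_splits)
      qed
    qed simp
    ultimately show ?thesis by (simp add: G_def)
  qed
  have E2: "G u v (nx m u) v' + G u v (pv m u) v' = r u v / 2"
    if u: "u < m" and v: "v < n" and v': "v' = nx n v \<or> v' = pv n v" for u v v'
  proof -
    have "(\<Sum>x\<in>?U. \<gamma> (u, v) (x, v')) = r u v / 2"
      using cyc_second_sum[OF J n _ v v'] u by (simp add: r_def)
    moreover have "(\<Sum>x\<in>?U. \<gamma> (u, v) (x, v')) = \<gamma> (u, v) (nx m u, v') + \<gamma> (u, v) (pv m u, v')"
    proof (rule sum_two_points)
      show "nx m u \<in> ?U" "pv m u \<in> ?U" using nx_lt pv_lt m0 by auto
      show "nx m u \<noteq> pv m u" using nx_ne_pv[OF m u] .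
      fix z assume z: "z \<in> ?U" "z \<noteq> nx m u" "z \<noteq> pv m u"
      show "\<gamma> (u, v) (z, v') = 0"
      proof (rule ccontr)
        assume nz: "\<gamma> (u, v) (z, v') \<noteq> 0"
        have "v' < n" using v' nx_lt pv_lt n0 by auto
        then have "(z = nx m u \<or> z = pv m u) \<and> cycle_w n v v' \<noteq> 0"
          using cyc_first_supp[OF J m u _ _ _ _ nz] z v qv[OF v] n0 by auto
        then show False using z by auto
      qed
    qed simp
    ultimately show ?thesis by (simp add: G_def)
  qed
  have rel1: "G u v (pv m u) (pv n v) = G u v (nx m u) (nx n v)"
    and rel2: "G u v (pv m u) (nx n v) = G u v (nx m u) (pv n v)"
    and rsum: "r u v = 2 * (G u v (nx m u) (nx n v) + G u v (nx m u) (pv n v))"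
    if u: "u < m" and v: "v < n" for u v
  proof -
    have e1: "G u v (nx m u) (nx n v) + G u v (nx m u) (pv n v) = r u v / 2" using E1 u v by blast
    have e2: "G u v (pv m u) (nx n v) + G u v (pv m u) (pv n v) = r u v / 2" using E1 u v by blast
    have e3: "G u v (nx m u) (nx n v) + G u v (pv m u) (nx n v) = r u v / 2" using E2 u v by blast
    have e4: "G u v (nx m u) (pv n v) + G u v (pv m u) (pv n v) = r u v / 2" using E2 u v by blast
    show "G u v (pv m u) (pv n v) = G u v (nx m u) (nx n v)" using e1 e4 by linarith
    show "G u v (pv m u) (nx n v) = G u v (nx m u) (pv n v)" using e1 e3 by linarith
    show "r u v = 2 * (G u v (nx m u) (nx n v) + G u v (nx m u) (pv n v))" using e1 by (simp add: field_simps)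
  qed
  define A where "A = (\<lambda>u v. G u v (nx m u) (nx n v))"
  define B where "B = (\<lambda>u v. G u v (nx m u) (pv n v))"
  have Ainv: "A u v = A ((u+1) mod m) ((v+1) mod n)" if u: "u < m" and v: "v < n" for u v
  proof -
    let ?u1 = "nx m u" and ?v1 = "nx n v"
    have "A ?u1 ?v1 = G ?u1 ?v1 (pv m ?u1) (pv n ?v1)"
      using rel1[of ?u1 ?v1] nx_lt m0 n0 by (simp add: A_def)
    also have "\<dots> = G ?u1 ?v1 u v" using pv_nx m0 n0 u v by simp
    also have "\<dots> = A u v" using sym[of ?u1 ?v1 u v] by (simp add: A_def)
    finally show ?thesis by (simp add: nx_def)
  qed
  have Binv: "B u v = B ((u+1) mod m) ((v+(n-1)) mod n)" if u: "u < m" and v: "v < n" for u v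
  proof -
    let ?u1 = "nx m u" and ?v1 = "pv n v"
    have "B ?u1 ?v1 = G ?u1 ?v1 (pv m ?u1) (nx n ?v1)"
      using rel2[of ?u1 ?v1] nx_lt pv_lt m0 n0 by (simp add: B_def)
    also have "\<dots> = G ?u1 ?v1 u v" using pv_nx nx_pv m0 n0 u v by simp
    also have "\<dots> = B u v" using sym[of ?u1 ?v1 u v] by (simp add: B_def)
    finally show ?thesis by (simp add: nx_def pv_def)
  qed
  have Ac: "A u v = A 0 0" if "u < m" "v < n" for u v
    by (rule orbit_const_all[where f=A, OF m0 n0 cop Ainv that])
  have Bc: "B u v = B 0 0" if "u < m" "v < n" for u v
    by (rule orbit_const_all'[where f=B, OF m0 _ cop Binv that]) (use n in simp)
  have rc: "r u v = 2 * (A 0 0 + B 0 0)" if "u < m" "v < n" for u v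
    using rsum[OF that] Ac[OF that] Bc[OF that] by (simp add: A_def B_def)
  have "(\<Sum>v\<in>?V. r 0 v) = 1 / real m"
    using weight_joiningD(2)[OF J, of 0] pu[of 0] m0 by (simp add: r_def)
  moreover have "(\<Sum>v\<in>?V. r 0 v) = real n * (2 * (A 0 0 + B 0 0))"
    using rc m0 by simp
  ultimately have c0: "real n * (2 * (A 0 0 + B 0 0)) = 1 / real m" by simp
  have c: "2 * (A 0 0 + B 0 0) = 1 / (real m * real n)"
  proof -
    have "2 * (A 0 0 + B 0 0) = (real n * (2 * (A 0 0 + B 0 0))) / real n" using n0 by simp
    also have "\<dots> = 1 / (real m * real n)" using c0 by simp
    finally show ?thesis .
  qed
  fix x y assume x: "x \<in> ?U" and y: "y \<in> ?V"
  show "wdeg (?U \<times> ?V) \<gamma> (x, y) = wdeg ?U (cycle_w m) x * wdeg ?V (cycle_w n) y"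
    using rc[of x y] c pu[of x] qv[of y] x y by (simp add: r_def)
qed



definition fold2 :: "nat \<Rightarrow> nat \<Rightarrow> nat" where
  "fold2 N w = (if w \<le> N then w else 2 * N - w)"

lemma fold2_cases:
  assumes N: "1 \<le> N" and w: "w < 2 * N"
  defines "w1 \<equiv> (w + 1) mod (2 * N)"
  defines "w2 \<equiv> (w1 + 1) mod (2 * N)"
  shows "(0 < fold2 N w1 \<and> fold2 N w1 < N \<and>
           ((fold2 N w = fold2 N w1 - 1 \<and> fold2 N w2 = fold2 N w1 + 1) \<or>
            (fold2 N w = fold2 N w1 + 1 \<and> fold2 N w2 = fold2 N w1 - 1)))
       \<or> (fold2 N w1 = 0 \<and> fold2 N w = 1 \<and> fold2 N w2 = 1)
       \<or> (fold2 N w1 = N \<and> fold2 N w = N - 1 \<and> fold2 N w2 = N - 1)"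
proof -
  have e1: "w1 = (if w + 1 = 2 * N then 0 else w + 1)" using w unfolding w1_def by auto
  have w1l: "w1 < 2 * N" using N unfolding w1_def by simp
  have e2: "w2 = (if w1 + 1 = 2 * N then 0 else w1 + 1)" using w1l unfolding w2_def by auto
  show ?thesis using N w w1l unfolding e2 e1 fold2_def by (auto split: if_splits)
qed

lemma fold2_hit:
  assumes N: "1 \<le> N" and v: "v \<le> N" and v': "v' \<le> N" and adj: "v' = v + 1 \<or> v = v' + 1"
  shows "\<exists>w < 2 * N. fold2 N w = v \<and> fold2 N ((w + 1) mod (2 * N)) = v'"
  using adj
proof
  assume a: "v' = v + 1"
  show ?thesis
    by (rule exI[of _ v]) (use N v v' a in \<open>auto simp: fold2_def\<close>)
next
  assume a: "v = v' + 1"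
  show ?thesis
  proof (rule exI[of _ "2 * N - v"], intro conjI)
    show "2 * N - v < 2 * N" using a N by simp
    show "fold2 N (2 * N - v) = v" using a v by (auto simp: fold2_def)
    show "fold2 N ((2 * N - v + 1) mod (2 * N)) = v'"
    proof (cases "v = 1")
      case True
      have "2 * N - v + 1 = 2 * N" using True N by simp
      then show ?thesis using a True by (simp add: fold2_def)
    next
      case False
      then have "(2 * N - v + 1) mod (2 * N) = 2 * N - v + 1" using a v by simp
      then show ?thesis using a v False by (auto simp: fold2_def)
    qed
  qed
qed



theorem cycle_path_strongly_disjoint:
  assumes m: "3 \<le> m" and n': "2 \<le> n'" and cop: "coprime m (2 * (n' - 1))"
  shows "strongly_disjoint {0..<m} (cycle_w m) {0..<n'} (path_w n')"
  unfolding strongly_disjoint_def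
proof (intro allI impI)
  fix \<gamma> assume J: "weight_joining {0..<m} (cycle_w m) {0..<n'} (path_w n') \<gamma>"
  let ?U = "{0..<m}" and ?V = "{0..<n'}"
  define N where "N = n' - 1"
  have nN: "n' = N + 1" and N1: "1 \<le> N" using n' by (auto simp: N_def)
  define r where "r = (\<lambda>u v. wdeg (?U \<times> ?V) \<gamma> (u, v))"
  define G where "G = (\<lambda>a b c d. \<gamma> (a, b) (c, d))"
  have wfg: "weight_fun (?U \<times> ?V) \<gamma>" using weight_joiningD(1)[OF J] .
  have sym: "G a b c d = G c d a b" for a b c d
    unfolding G_def using weight_funD(3)[OF wfg] by blast
  have pu: "wdeg ?U (cycle_w m) u = 1 / real m" if "u < m" for u using wdeg_cycle[OF m that] .
  have qv: "wdeg ?V (path_w n') v = (of_bool (v + 1 < n') + of_bool (0 < v)) / (2 * real N)"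
    if "v < n'" for v using wdeg_path[OF n' that] by (simp add: N_def)
  have qpos: "0 < wdeg ?V (path_w n') v" if "v < n'" for v
    using qv[OF that] that N1 nN by (cases "v = 0") auto
  have m0: "0 < m" using m by simp
  have pw: "path_w n' v v' = (if v' = v + 1 \<or> v = v' + 1 then 1 / (2 * real N) else 0)"
    if "v < n'" "v' < n'" for v v' using path_w_eq[OF that] by (simp add: N_def)
  have supp: "(u' = nx m u \<or> u' = pv m u) \<and> (v' = v + 1 \<or> v = v' + 1)"
    if u: "u < m" and v: "v < n'" and u': "u' < m" and v': "v' < n'" and nz: "G u v u' v' \<noteq> 0" for u v u' v'
  proof -
    have "(u' = nx m u \<or> u' = pv m u) \<and> path_w n' v v' \<noteq> 0"
      by (rule cyc_first_supp[OF J m u u']) (use v v' qpos[OF v] nz in \<open>auto simp: G_def\<close>)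
    then show ?thesis using pw[OF v v'] by (auto split: if_splits)
  qed
  have S1: "(\<Sum>x\<in>?V. G u v u' x) = r u v / 2"
    if u: "u < m" and v: "v < n'" and u': "u' = nx m u \<or> u' = pv m u" for u v u'
    using cyc_first_sum[OF J m u _ u'] v by (simp add: r_def G_def)
  have S2: "(\<Sum>x\<in>?U. G u v x v') = G u v (nx m u) v' + G u v (pv m u) v'"
    if u: "u < m" and v: "v < n'" and v': "v' < n'" for u v v'
  proof (rule sum_two_points)
    show "nx m u \<in> ?U" "pv m u \<in> ?U" using nx_lt pv_lt m0 by auto
    show "nx m u \<noteq> pv m u" using nx_ne_pv[OF m u] .
    fix z assume z: "z \<in> ?U" "z \<noteq> nx m u" "z \<noteq> pv m u"
    show "G u v z v' = 0"
    proof (rule ccontr)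
      assume nz: "G u v z v' \<noteq> 0"
      then show False using supp[OF u v _ v' nz] z by auto
    qed
  qed simp
  have S2': "(\<Sum>x\<in>?U. G u v x v') = path_w n' v v' / wdeg ?V (path_w n') v * r u v"
    if u: "u < m" and v: "v < n'" and v': "v' < n'" for u v v'
    using joining_colsum2[OF J _ _ _ qpos[OF v], of u v'] u v v' by (simp add: r_def G_def)
  have uu: "nx m u \<noteq> pv m u" if "u < m" for u using nx_ne_pv[OF m that] .
  have LOCi: "G u v (pv m u) (v - 1) = G u v (nx m u) (v + 1) \<and> G u v (pv m u) (v + 1) = G u v (nx m u) (v - 1)"
    if u: "u < m" and v0: "0 < v" and vN: "v < N" for u v
  proof -
    have v: "v < n'" using vN nN by simp
    have two: "(\<Sum>x\<in>?V. G u v u' x) = G u v u' (v + 1) + G u v u' (v - 1)"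
      if u': "u' = nx m u \<or> u' = pv m u" for u'
    proof (rule sum_two_points)
      show "v + 1 \<in> ?V" "v - 1 \<in> ?V" using vN nN by auto
      show "v + 1 \<noteq> v - 1" by simp
      fix z assume z: "z \<in> ?V" "z \<noteq> v + 1" "z \<noteq> v - 1"
      show "G u v u' z = 0"
      proof (rule ccontr)
        assume nz: "G u v u' z \<noteq> 0"
        have "u' < m" using u' nx_lt pv_lt m0 by auto
        then show False using supp[OF u v _ _ nz] z by auto
      qed
    qed simp
    have e1: "G u v (nx m u) (v + 1) + G u v (nx m u) (v - 1) = r u v / 2"
      using two[of "nx m u"] S1[OF u v, of "nx m u"] by simp
    have e2: "G u v (pv m u) (v + 1) + G u v (pv m u) (v - 1) = r u v / 2"
      using two[of "pv m u"] S1[OF u v, of "pv m u"] by simp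
    have q: "wdeg ?V (path_w n') v = 1 / real N" using qv[OF v] v0 vN nN by simp
    have ratio: "path_w n' v v' / wdeg ?V (path_w n') v = 1 / 2" if "v' = v + 1 \<or> v' = v - 1" for v'
      using pw[OF v, of v'] that q v0 vN nN N1 by auto
    have e3: "G u v (nx m u) (v + 1) + G u v (pv m u) (v + 1) = r u v / 2"
      using S2[OF u v, of "v + 1"] S2'[OF u v, of "v + 1"] ratio[of "v + 1"] vN nN by simp
    have e4: "G u v (nx m u) (v - 1) + G u v (pv m u) (v - 1) = r u v / 2"
      using S2[OF u v, of "v - 1"] S2'[OF u v, of "v - 1"] ratio[of "v - 1"] v nN by simp
    show ?thesis using e1 e2 e3 e4 by linarith
  qed
  have LOC0: "G u 0 (pv m u) 1 = G u 0 (nx m u) 1 \<and> G u 0 (nx m u) 1 = r u 0 / 2"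
    if u: "u < m" for u
  proof -
    have v: "0 < n'" using nN by simp
    have one: "(\<Sum>x\<in>?V. G u 0 u' x) = G u 0 u' 1" if u': "u' = nx m u \<or> u' = pv m u" for u'
    proof (rule sum_one_point)
      show "1 \<in> ?V" using nN N1 by auto
      fix z assume z: "z \<in> ?V" "z \<noteq> 1"
      show "G u 0 u' z = 0"
      proof (rule ccontr)
        assume nz: "G u 0 u' z \<noteq> 0"
        have "u' < m" using u' nx_lt pv_lt m0 by auto
        then show False using supp[OF u v _ _ nz] z by auto
      qed
    qed simp
    show ?thesis using one[of "nx m u"] S1[OF u v, of "nx m u"] one[of "pv m u"] S1[OF u v, of "pv m u"]
      by simp
  qed
  have LOCN: "G u N (pv m u) (N - 1) = G u N (nx m u) (N - 1)"
    if u: "u < m" for u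
  proof -
    have v: "N < n'" using nN by simp
    have one: "(\<Sum>x\<in>?V. G u N u' x) = G u N u' (N - 1)" if u': "u' = nx m u \<or> u' = pv m u" for u'
    proof (rule sum_one_point)
      show "N - 1 \<in> ?V" using nN N1 by auto
      fix z assume z: "z \<in> ?V" "z \<noteq> N - 1"
      show "G u N u' z = 0"
      proof (rule ccontr)
        assume nz: "G u N u' z \<noteq> 0"
        have "u' < m" using u' nx_lt pv_lt m0 by auto
        then show False using supp[OF u v _ _ nz] z nN by auto
      qed
    qed simp
    show ?thesis using one[of "nx m u"] S1[OF u v, of "nx m u"] one[of "pv m u"] S1[OF u v, of "pv m u"]
      by simp
  qed
  define E where "E = (\<lambda>u w. G u (fold2 N w) (nx m u) (fold2 N ((w + 1) mod (2 * N))))"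
  have fold_lt: "fold2 N w < n'" if "w < 2 * N" for w using that nN by (auto simp: fold2_def)
  have Einv: "E u w = E ((u + 1) mod m) ((w + 1) mod (2 * N))" if u: "u < m" and w: "w < 2 * N" for u w
  proof -
    define u1 where "u1 = nx m u"
    define w1 where "w1 = (w + 1) mod (2 * N)"
    define w2 where "w2 = (w1 + 1) mod (2 * N)"
    have u1l: "u1 < m" using nx_lt m0 by (simp add: u1_def)
    have w1l: "w1 < 2 * N" using N1 by (simp add: w1_def)
    have "E u w = G u1 (fold2 N w1) u (fold2 N w)"
      using sym by (simp add: E_def u1_def w1_def)
    also have "\<dots> = G u1 (fold2 N w1) (pv m u1) (fold2 N w)"
      using pv_nx[OF m0 u] by (simp add: u1_def)
    also have "\<dots> = G u1 (fold2 N w1) (nx m u1) (fold2 N w2)"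
    proof -
      have C: "(0 < fold2 N w1 \<and> fold2 N w1 < N \<and>
           ((fold2 N w = fold2 N w1 - 1 \<and> fold2 N w2 = fold2 N w1 + 1) \<or>
            (fold2 N w = fold2 N w1 + 1 \<and> fold2 N w2 = fold2 N w1 - 1)))
       \<or> (fold2 N w1 = 0 \<and> fold2 N w = 1 \<and> fold2 N w2 = 1)
       \<or> (fold2 N w1 = N \<and> fold2 N w = N - 1 \<and> fold2 N w2 = N - 1)"
        using fold2_cases[OF N1 w] by (simp add: w1_def w2_def)
      then show ?thesis
      proof (elim disjE conjE)
        assume "0 < fold2 N w1" "fold2 N w1 < N" "fold2 N w = fold2 N w1 - 1" "fold2 N w2 = fold2 N w1 + 1"
        then show ?thesis using LOCi[OF u1l, of "fold2 N w1"] by simp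
      next
        assume "0 < fold2 N w1" "fold2 N w1 < N" "fold2 N w = fold2 N w1 + 1" "fold2 N w2 = fold2 N w1 - 1"
        then show ?thesis using LOCi[OF u1l, of "fold2 N w1"] by simp
      next
        assume "fold2 N w1 = 0" "fold2 N w = 1" "fold2 N w2 = 1"
        then show ?thesis using LOC0[OF u1l] by simp
      next
        assume "fold2 N w1 = N" "fold2 N w = N - 1" "fold2 N w2 = N - 1"
        then show ?thesis using LOCN[OF u1l] by simp
      qed
    qed
    also have "\<dots> = E u1 w1" by (simp add: E_def w2_def)
    finally show ?thesis by (simp add: u1_def w1_def nx_def)
  qed
  have N2: "0 < 2 * N" using N1 by simp
  have Ec: "E u w = E 0 0" if "u < m" "w < 2 * N" for u w
    by (rule orbit_const_all[where f=E, OF m0 N2 _ Einv that]) (use cop N_def in simp)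
  define e where "e = E 0 0"
  have Gnx: "G u v (nx m u) v' = e" if u: "u < m" and v: "v < n'" and v': "v' < n'"
    and adj: "v' = v + 1 \<or> v = v' + 1" for u v v'
  proof -
    obtain w where w: "w < 2 * N" "fold2 N w = v" "fold2 N ((w + 1) mod (2 * N)) = v'"
      using fold2_hit[OF N1 _ _ adj] v v' nN by auto
    show ?thesis using Ec[OF u w(1)] w by (simp add: E_def e_def)
  qed
  have Gall: "G u v u' v' = (if (u' = nx m u \<or> u' = pv m u) \<and> (v' = v + 1 \<or> v = v' + 1) then e else 0)"
    if u: "u < m" and v: "v < n'" and u': "u' < m" and v': "v' < n'" for u v u' v'
  proof (cases "(u' = nx m u \<or> u' = pv m u) \<and> (v' = v + 1 \<or> v = v' + 1)")
    case True
    then consider "u' = nx m u" | "u' = pv m u" by blast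
    then show ?thesis
    proof cases
      case 1 then show ?thesis using Gnx[OF u v v'] True by simp
    next
      case 2
      have "G u v u' v' = G u' v' (nx m u') v" using sym nx_pv[OF m0 u] 2 by simp
      also have "\<dots> = e" using Gnx[OF u' v' v] True by auto
      finally show ?thesis using True by simp
    qed
  next
    case False
    then show ?thesis using supp[OF u v u' v'] by auto
  qed
  have r0: "r u 0 = 2 * e" if u: "u < m" for u
    using LOC0[OF u] Gnx[OF u, of 0 1] nN N1 by simp
  have "(\<Sum>u\<in>?U. r u 0) = wdeg ?V (path_w n') 0"
    using weight_joiningD(3)[OF J, of 0] nN by (simp add: r_def)
  also have "\<dots> = 1 / (2 * real N)" using qv[of 0] nN N1 by simp
  finally have "real m * (2 * e) = 1 / (2 * real N)" using r0 by simp
  then have ev: "e = 1 / (2 * real m) * (1 / (2 * real N))"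
    using m0 N1 by (simp add: field_simps)
  show "\<gamma> = tensor_weight (cycle_w m) (path_w n')"
  proof (intro ext)
    fix x y :: "nat \<times> nat"
    obtain u v where x: "x = (u, v)" by fastforce
    obtain u' v' where y: "y = (u', v')" by fastforce
    show "\<gamma> x y = tensor_weight (cycle_w m) (path_w n') x y"
    proof (cases "u < m \<and> v < n' \<and> u' < m \<and> v' < n'")
      case True
      then have "\<gamma> x y = (if (u' = nx m u \<or> u' = pv m u) \<and> (v' = v + 1 \<or> v = v' + 1) then e else 0)"
        using Gall[of u v u' v'] x y by (simp add: G_def)
      then show ?thesis using True x y ev
        by (simp add: tensor_weight_def cycle_w_eq pw)
    next
      case False
      then have "\<gamma> x y = 0" using weight_funD(4,5)[OF wfg] x y by auto
      moreover have "tensor_weight (cycle_w m) (path_w n') x y = 0"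
        using False x y cycle_w_out path_w_out by (auto simp: tensor_weight_def)
      ultimately show ?thesis by simp
    qed
  qed
qed



lemma factor_from_local:
  fixes k :: nat and W :: "nat set"
  assumes wU: "weight_fun U \<alpha>" and wW: "weight_fun W \<kappa>" and Wk: "W = {0..<k}"
    and im: "\<phi> ` U = W"
    and conn: "\<And>j. j + 1 < k \<Longrightarrow> 0 < \<kappa> j (j + 1)"
    and spos: "\<And>w. w \<in> W \<Longrightarrow> 0 < wdeg W \<kappa> w"
    and loc: "\<And>v v' u. v \<in> W \<Longrightarrow> v' \<in> W \<Longrightarrow> u \<in> U \<Longrightarrow> \<phi> u = v \<Longrightarrow>
          wdeg W \<kappa> v * (\<Sum>u'\<in>{u'\<in>U. \<phi> u' = v'}. \<alpha> u u') = wdeg U \<alpha> u * \<kappa> v v'"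
  shows "graph_factor W \<kappa> U \<alpha>"
proof -
  define s where "s = wdeg W \<kappa>"
  define p where "p = wdeg U \<alpha>"
  define P where "P = (\<lambda>v. \<Sum>u\<in>{u\<in>U. \<phi> u = v}. p u)"
  define T where "T = (\<lambda>v v'. \<Sum>u\<in>{u\<in>U. \<phi> u = v}. \<Sum>u'\<in>{u'\<in>U. \<phi> u' = v'}. \<alpha> u u')"
  have finU: "finite U" using weight_funD(1)[OF wU] .
  have Tv: "T v v' = P v * \<kappa> v v' / s v" if v: "v \<in> W" and v': "v' \<in> W" for v v'
  proof -
    have "T v v' = (\<Sum>u\<in>{u\<in>U. \<phi> u = v}. p u * \<kappa> v v' / s v)"
      unfolding T_def
    proof (rule sum.cong[OF refl])
      fix u assume "u \<in> {u\<in>U. \<phi> u = v}"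
      then have u: "u \<in> U" "\<phi> u = v" by auto
      have "s v * (\<Sum>u'\<in>{u'\<in>U. \<phi> u' = v'}. \<alpha> u u') = p u * \<kappa> v v'"
        using loc[OF v v' u] by (simp add: s_def p_def)
      moreover have "s v > 0" using spos[OF v] by (simp add: s_def)
      ultimately show "(\<Sum>u'\<in>{u'\<in>U. \<phi> u' = v'}. \<alpha> u u') = p u * \<kappa> v v' / s v"
        by (simp add: field_simps)
    qed
    also have "\<dots> = P v * \<kappa> v v' / s v" by (simp add: P_def sum_distrib_right sum_divide_distrib)
    finally show ?thesis .
  qed
  have Tsym: "T v v' = T v' v" for v v'
    unfolding T_def using sum.swap[of "\<lambda>u u'. \<alpha> u u'" "{u\<in>U. \<phi> u = v'}" "{u\<in>U. \<phi> u = v}"]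
      weight_funD(3)[OF wU] by simp
  have step: "P j / s j = P (j + 1) / s (j + 1)" if j: "j + 1 < k" for j
  proof -
    have jW: "j \<in> W" "j + 1 \<in> W" using j Wk by auto
    have "P j * \<kappa> j (j + 1) / s j = P (j + 1) * \<kappa> (j + 1) j / s (j + 1)"
      using Tv[OF jW] Tv[OF jW(2,1)] Tsym by metis
    then have "P j * \<kappa> j (j + 1) / s j = P (j + 1) * \<kappa> j (j + 1) / s (j + 1)"
      using weight_funD(3)[OF wW] by metis
    then have e: "(P j / s j) * \<kappa> j (j + 1) = (P (j + 1) / s (j + 1)) * \<kappa> j (j + 1)"
      by (simp add: mult.commute mult.left_commute times_divide_eq_left)
    have "\<kappa> j (j + 1) \<noteq> 0" using conn[OF j] by simp
    then show ?thesis using e mult_right_cancel by blast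
  qed
  have const: "j < k \<Longrightarrow> P j / s j = P 0 / s 0" for j
  proof (induction j)
    case 0 then show ?case by simp
  next
    case (Suc j) then show ?case using step[of j] by simp
  qed
  define c where "c = P 0 / s 0"
  have Pj: "P j = c * s j" if "j \<in> W" for j
  proof -
    have "s j > 0" using spos[OF that] by (simp add: s_def)
    then show ?thesis using const[of j] that Wk by (simp add: c_def field_simps)
  qed
  have "sum P W = sum p U"
    unfolding P_def using sum.group[OF finU, of W \<phi> p] im weight_funD(1)[OF wW] by auto
  also have "\<dots> = 1" unfolding p_def by (rule sum_wdeg[OF wU])
  finally have "sum P W = 1" .
  moreover have "sum P W = c * sum s W" using Pj by (simp add: sum_distrib_left)
  moreover have "sum s W = 1" unfolding s_def by (rule sum_wdeg[OF wW])
  ultimately have c1: "c = 1" by simp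
  show ?thesis
    unfolding graph_factor_def
  proof (intro exI[of _ \<phi>] conjI ballI impI)
    show "\<phi> ` U = W" by (rule im)
    show "wdeg W \<kappa> v = (\<Sum>u\<in>{u\<in>U. \<phi> u = v}. wdeg U \<alpha> u)" if "v \<in> W" for v
      using Pj[OF that] c1 by (simp add: P_def p_def s_def)
    show "wdeg W \<kappa> v * (\<Sum>u'\<in>{u'\<in>U. \<phi> u' = v'}. \<alpha> u u') = wdeg U \<alpha> u * \<kappa> v v'"
      if "v \<in> W" "v' \<in> W" "u \<in> U" "\<phi> u = v" for v v' u using loc that by blast
  qed
qed



definition fm :: "nat \<Rightarrow> nat \<Rightarrow> nat" where
  "fm d i = (if 2 * (i mod d) \<le> d then i mod d else d - i mod d)"

definition fw :: "nat \<Rightarrow> nat \<Rightarrow> nat \<Rightarrow> real" where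
  "fw d i j = (if i \<le> d div 2 \<and> j \<le> d div 2 \<and> (j = i + 1 \<or> i = j + 1 \<or> (odd d \<and> i = d div 2 \<and> j = d div 2))
     then 1 / real d else 0)"

lemma fm_mod: "fm d (i mod d) = fm d i" by (simp add: fm_def)

lemma fm_le: "0 < d \<Longrightarrow> fm d i \<le> d div 2" by (auto simp: fm_def)

lemma fm_small: "2 * v \<le> d \<Longrightarrow> 0 < d \<Longrightarrow> v < d \<Longrightarrow> fm d v = v" by (simp add: fm_def)

lemma fold_nb:
  assumes d: "2 \<le> d" and a: "a < d"
  defines "h \<equiv> d div 2"
  defines "v \<equiv> fm d a" and "x \<equiv> fm d (nx d a)" and "y \<equiv> fm d (pv d a)"
  shows "(v = 0 \<and> x = 1 \<and> y = 1)
    \<or> (0 < v \<and> v < h \<and> ((x = v + 1 \<and> y = v - 1) \<or> (x = v - 1 \<and> y = v + 1)))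
    \<or> (v = h \<and> 0 < v \<and> odd d \<and> ((x = h \<and> y = h - 1) \<or> (x = h - 1 \<and> y = h)))
    \<or> (v = h \<and> 0 < v \<and> even d \<and> x = h - 1 \<and> y = h - 1)"
proof -
  have dh: "d = 2 * h \<or> d = 2 * h + 1" unfolding h_def by presburger
  have oe: "odd d \<longleftrightarrow> d = 2 * h + 1" unfolding h_def by presburger
  have nxa: "nx d a = (if a + 1 = d then 0 else a + 1)" using nx_alt[OF a] .
  have pva: "pv d a = (if a = 0 then d - 1 else a - 1)" using pv_alt[OF a] .
  have f: "fm d i = (if 2 * i \<le> d then i else d - i)" if "i < d" for i
    using that by (simp add: fm_def)
  have l1: "nx d a < d" "pv d a < d" using nx_lt pv_lt d by auto
  have V: "v = (if 2 * a \<le> d then a else d - a)" unfolding v_def f[OF a] ..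
  have X: "x = (if 2 * nx d a \<le> d then nx d a else d - nx d a)" unfolding x_def f[OF l1(1)] ..
  have Y: "y = (if 2 * pv d a \<le> d then pv d a else d - pv d a)" unfolding y_def f[OF l1(2)] ..
  consider (A) "a = 0" | (B) "0 < a" "2 * (a + 1) \<le> d" | (C) "2 * a \<le> d" "d < 2 * (a + 1)"
    | (D1) "d < 2 * a" "d < 2 * (a - 1)" | (D2) "d < 2 * a" "2 * (a - 1) \<le> d" by linarith
  then show ?thesis
  proof cases
    case A
    have "v = 0" using V A by simp
    moreover have "x = 1" using X A d nxa by auto
    moreover have "y = 1" using Y A d pva by auto
    ultimately show ?thesis by simp
  next
    case B
    have "v = a" using V B by simp
    moreover have "x = a + 1" using X B d nxa by auto
    moreover have "y = a - 1" using Y B d pva by auto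
    moreover have "a < h" using B dh by presburger
    ultimately show ?thesis using B by simp
  next
    case C
    have ah: "a = h" using C dh by presburger
    have h1: "1 \<le> h" using d dh by presburger
    have vh: "v = h" using V C ah by simp
    have yh: "y = h - 1" using Y C d pva ah h1 dh by auto
    show ?thesis
    proof (cases "odd d")
      case True
      then have d2: "d = 2 * h + 1" using oe by simp
      have "x = h" using X d pva nxa ah d2 by auto
      then show ?thesis using vh yh True h1 by simp
    next
      case False
      then have d2: "d = 2 * h" using dh oe by auto
      have "x = h - 1" using X d nxa ah d2 h1 by auto
      then show ?thesis using vh yh False h1 by simp
    qed
  next
    case D1
    have vv: "v = d - a" using V D1 by simp
    have "y = v + 1" using Y D1 pva vv a by auto
    moreover have "x = v - 1" using X D1 nxa vv a by auto
    moreover have "0 < v" "v < h" using vv D1 a dh by presburger+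
    ultimately show ?thesis by simp
  next
    case D2
    have h1: "1 \<le> h" using d dh by presburger
    show ?thesis
    proof (cases "odd d")
      case True
      then have d2: "d = 2 * h + 1" using oe by simp
      have ah: "a = h + 1" using D2 d2 by presburger
      have vh: "v = h" using V D2 ah d2 by simp
      have "y = h" using Y pva ah d2 by auto
      moreover have "x = h - 1" using X nxa ah d2 a by auto
      ultimately show ?thesis using vh True h1 by simp
    next
      case False
      then have d2: "d = 2 * h" using dh oe by auto
      have ah: "a = h + 1" using D2 d2 by presburger
      have vh: "v = h - 1" using V D2 ah d2 by simp
      have "y = v + 1" using Y pva ah d2 vh h1 by auto
      moreover have "x = v - 1" using X nxa ah d2 a vh by auto
      moreover have "0 < v" "v < h" using vh ah a d2 by presburger+
      ultimately show ?thesis by simp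
    qed
  qed
qed

lemma fw_eq:
  assumes "v \<le> d div 2" "v' \<le> d div 2"
  shows "fw d v v' = (of_bool (v' = v + 1) + of_bool (v = v' + 1) + of_bool (odd d \<and> v = d div 2 \<and> v' = d div 2)) / real d"
  using assms by (auto simp: fw_def)

lemma fw_wdeg:
  assumes d: "2 \<le> d" and v: "v \<le> d div 2"
  shows "wdeg {0..<d div 2 + 1} (fw d) v =
     (of_bool (v + 1 \<le> d div 2) + of_bool (0 < v) + of_bool (odd d \<and> v = d div 2)) / real d"
proof -
  let ?W = "{0..<d div 2 + 1}"
  have "wdeg ?W (fw d) v = (\<Sum>j\<in>?W. (if j = v + 1 then 1 / real d else 0) + (if j = v - 1 then of_bool (0 < v) / real d else 0)
       + (if j = v then of_bool (odd d \<and> v = d div 2) / real d else 0))"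
    unfolding wdeg_def
    by (rule sum.cong[OF refl]) (use v in \<open>auto simp: fw_def\<close>)
  also have "\<dots> = (of_bool (v + 1 \<le> d div 2) + of_bool (0 < v) + of_bool (odd d \<and> v = d div 2)) / real d"
    using v by (simp add: sum.distrib add_divide_distrib)
  finally show ?thesis .
qed

lemma weight_fun_fw:
  assumes d: "2 \<le> d"
  shows "weight_fun {0..<d div 2 + 1} (fw d)"
proof -
  let ?W = "{0..<d div 2 + 1}" and ?c = "1 / real d"
  have "(\<Sum>x\<in>?W. \<Sum>y\<in>?W. fw d x y) = (\<Sum>x\<in>?W. wdeg ?W (fw d) x)" by (simp add: wdeg_def)
  also have "\<dots> = (\<Sum>x\<in>?W. of_bool (x + 1 \<le> d div 2) * ?c + of_bool (0 < x) * ?c + of_bool (odd d \<and> x = d div 2) * ?c)"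
  proof (rule sum.cong[OF refl])
    fix x assume "x \<in> ?W"
    then have x: "x \<le> d div 2" by simp
    show "wdeg ?W (fw d) x = of_bool (x + 1 \<le> d div 2) * ?c + of_bool (0 < x) * ?c + of_bool (odd d \<and> x = d div 2) * ?c"
      unfolding fw_wdeg[OF d x] by (simp add: add_divide_distrib)
  qed
  also have "\<dots> = (\<Sum>x\<in>?W. of_bool (x + 1 \<le> d div 2) * ?c) + (\<Sum>x\<in>?W. of_bool (0 < x) * ?c)
      + (\<Sum>x\<in>?W. of_bool (odd d \<and> x = d div 2) * ?c)"
    by (simp add: sum.distrib)
  also have "\<dots> = real (card {x\<in>?W. x + 1 \<le> d div 2}) * ?c + real (card {x\<in>?W. 0 < x}) * ?c
      + real (card {x\<in>?W. odd d \<and> x = d div 2}) * ?c"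
    by (simp only: sum_of_bool_mult finite_atLeastLessThan)
  also have "{x\<in>?W. x + 1 \<le> d div 2} = {0..<d div 2}" by auto
  also have "{x\<in>?W. 0 < x} = {1..<d div 2 + 1}" by auto
  also have "card {x\<in>?W. odd d \<and> x = d div 2} = of_bool (odd d)"
  proof (cases "odd d")
    case True
    then have "{x\<in>?W. odd d \<and> x = d div 2} = {d div 2}" by auto
    then show ?thesis using True by simp
  next
    case False
    then show ?thesis by simp
  qed
  also have "real (card {0..<d div 2}) * ?c + real (card {1..<d div 2 + 1}) * ?c + real (of_bool (odd d)) * ?c = 1"
  proof -
    have "real (d div 2) + real (d div 2) + of_bool (odd d) = real d"
    proof -
      have "d = d div 2 + d div 2 + of_bool (odd d)" by (cases "odd d") (simp_all, presburger+)
      then show ?thesis by (metis of_nat_add of_nat_of_bool)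
    qed
    then show ?thesis using d by (simp add: field_simps)
  qed
  finally show ?thesis
    unfolding weight_fun_def by (auto simp: fw_def)
qed

lemma fw_s0: "2 \<le> d \<Longrightarrow> wdeg {0..<d div 2 + 1} (fw d) 0 = 1 / real d"
  using fw_wdeg[of d 0] by auto

lemma fw_spos: "2 \<le> d \<Longrightarrow> v \<le> d div 2 \<Longrightarrow> 0 < wdeg {0..<d div 2 + 1} (fw d) v"
  using fw_wdeg[of d v] by (cases "v = 0") auto

lemma fold_count:
  assumes d: "2 \<le> d" and a: "a < d" and v': "v' \<le> d div 2"
  shows "wdeg {0..<d div 2 + 1} (fw d) (fm d a) *
      (of_bool (fm d (nx d a) = v') + of_bool (fm d (pv d a) = v')) / 2 = fw d (fm d a) v'"
proof -
  let ?h = "d div 2"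
  have vle: "fm d a \<le> ?h" using fm_le d by simp
  have S: "wdeg {0..<?h + 1} (fw d) (fm d a) =
     (of_bool (fm d a + 1 \<le> ?h) + of_bool (0 < fm d a) + of_bool (odd d \<and> fm d a = ?h)) / real d"
    using fw_wdeg[OF d vle] .
  have F: "fw d (fm d a) v' = (of_bool (v' = fm d a + 1) + of_bool (fm d a = v' + 1) + of_bool (odd d \<and> fm d a = ?h \<and> v' = ?h)) / real d"
    using fw_eq[OF vle v'] .
  have h1: "1 \<le> ?h" using d by simp
  let ?v = "fm d a" and ?x = "fm d (nx d a)" and ?y = "fm d (pv d a)"
  have NB: "(?v = 0 \<and> ?x = 1 \<and> ?y = 1)
    \<or> (0 < ?v \<and> ?v < ?h \<and> ((?x = ?v + 1 \<and> ?y = ?v - 1) \<or> (?x = ?v - 1 \<and> ?y = ?v + 1)))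
    \<or> (?v = ?h \<and> 0 < ?v \<and> odd d \<and> ((?x = ?h \<and> ?y = ?h - 1) \<or> (?x = ?h - 1 \<and> ?y = ?h)))
    \<or> (?v = ?h \<and> 0 < ?v \<and> even d \<and> ?x = ?h - 1 \<and> ?y = ?h - 1)"
    using fold_nb[OF d a] by simp
  then show ?thesis
  proof (elim disjE conjE)
    assume "?v = 0" "?x = 1" "?y = 1"
    then show ?thesis unfolding S F using h1 by simp
  next
    assume "0 < ?v" "?v < ?h" "?x = ?v + 1" "?y = ?v - 1"
    then show ?thesis unfolding S F using h1 by (auto simp: field_simps)
  next
    assume "0 < ?v" "?v < ?h" "?x = ?v - 1" "?y = ?v + 1"
    then show ?thesis unfolding S F using h1 by (auto simp: field_simps)
  next
    assume "?v = ?h" "0 < ?v" "odd d" "?x = ?h" "?y = ?h - 1"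
    then show ?thesis unfolding S F using h1 v' by (auto simp: field_simps)
  next
    assume "?v = ?h" "0 < ?v" "odd d" "?x = ?h - 1" "?y = ?h"
    then show ?thesis unfolding S F using h1 v' by (auto simp: field_simps)
  next
    assume "?v = ?h" "0 < ?v" "even d" "?x = ?h - 1" "?y = ?h - 1"
    then show ?thesis unfolding S F using h1 v' by (auto simp: field_simps)
  qed
qed



lemma nx_mod: fixes d m :: nat assumes "d dvd m" "0 < d" shows "(nx m u) mod d = nx d (u mod d)"
proof -
  have "(nx m u) mod d = (u + 1) mod d" using assms by (simp add: nx_def mod_mod_cancel)
  also have "\<dots> = nx d (u mod d)" by (simp add: nx_def mod_Suc_eq)
  finally show ?thesis .
qed

lemma pv_mod: fixes d m :: nat assumes "d dvd m" "0 < d" "0 < m" shows "(pv m u) mod d = pv d (u mod d)"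
proof -
  have dm: "d \<le> m" using assms by (simp add: dvd_imp_le)
  have "d dvd m - d" using assms by (simp add: dvd_diff_nat)
  then obtain t where t: "m - d = d * t" by (elim dvdE)
  have "(pv m u) mod d = (u + (m - 1)) mod d" using assms by (simp add: pv_def mod_mod_cancel)
  also have "u + (m - 1) = (u + (d - 1)) + d * t" using t dm assms by simp
  also have "((u + (d - 1)) + d * t) mod d = (u + (d - 1)) mod d" by simp
  also have "\<dots> = pv d (u mod d)" by (simp add: pv_def mod_add_left_eq)
  finally show ?thesis .
qed

lemma fm_image:
  assumes d: "2 \<le> d" and hk: "d div 2 < k"
  shows "fm d ` {0..<k} = {0..<d div 2 + 1}"
proof
  show "fm d ` {0..<k} \<subseteq> {0..<d div 2 + 1}" using fm_le[of d] d by (auto simp: less_Suc_eq_le)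
  show "{0..<d div 2 + 1} \<subseteq> fm d ` {0..<k}"
  proof
    fix v assume "v \<in> {0..<d div 2 + 1}"
    then have v: "v \<le> d div 2" by simp
    then have "fm d v = v" using d by (intro fm_small) auto
    moreover have "v \<in> {0..<k}" using v hk by simp
    ultimately show "v \<in> fm d ` {0..<k}" by (metis image_eqI)
  qed
qed

lemma fw_conn: "j + 1 < d div 2 + 1 \<Longrightarrow> 0 < fw d j (j + 1)"
  by (simp add: fw_def)

lemma fold_count_end:
  assumes d: "2 \<le> d" and a: "a < d" and v': "v' \<le> d div 2"
    and same: "fm d (nx d a) = fm d (pv d a)"
  shows "wdeg {0..<d div 2 + 1} (fw d) (fm d a) * of_bool (fm d (nx d a) = v') = fw d (fm d a) v'"
  using fold_count[OF d a v'] same by simp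

lemma cycle_fold_factor:
  assumes m: "3 \<le> m" and d: "2 \<le> d" and dm: "d dvd m"
  shows "graph_factor {0..<d div 2 + 1} (fw d) {0..<m} (cycle_w m)"
proof (rule factor_from_local[OF weight_fun_cycle[OF m] weight_fun_fw[OF d] refl])
  have "d \<le> m" using dm m by (simp add: dvd_imp_le)
  then show "fm d ` {0..<m} = {0..<d div 2 + 1}" using fm_image[OF d] d by simp
  show "\<And>j. j + 1 < d div 2 + 1 \<Longrightarrow> 0 < fw d j (j + 1)" by (rule fw_conn)
  show "\<And>w. w \<in> {0..<d div 2 + 1} \<Longrightarrow> 0 < wdeg {0..<d div 2 + 1} (fw d) w"
    using fw_spos[OF d] by simp
  fix v v' u
  assume v: "v \<in> {0..<d div 2 + 1}" and v': "v' \<in> {0..<d div 2 + 1}" and u: "u \<in> {0..<m}" and fu: "fm d u = v"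
  let ?F = "{u' \<in> {0..<m}. fm d u' = v'}"
  have d0: "0 < d" using d by simp
  have ul: "u < m" using u by simp
  have sum: "(\<Sum>u'\<in>?F. cycle_w m u u') = (of_bool (nx m u \<in> ?F) + of_bool (pv m u \<in> ?F)) / (2 * real m)"
    by (rule cycle_sum_set[OF m ul]) auto
  have e1: "(nx m u \<in> ?F) = (fm d (nx d (u mod d)) = v')"
    using nx_lt[of m u] m fm_mod[of d "nx m u"] nx_mod[OF dm d0, of u] by auto
  have e2: "(pv m u \<in> ?F) = (fm d (pv d (u mod d)) = v')"
    using pv_lt[of m u] m fm_mod[of d "pv m u"] pv_mod[OF dm d0, of u] m by auto
  have fa: "fm d (u mod d) = v" using fu fm_mod by simp
  have C: "wdeg {0..<d div 2 + 1} (fw d) v *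
      (of_bool (fm d (nx d (u mod d)) = v') + of_bool (fm d (pv d (u mod d)) = v')) / 2 = fw d v v'"
    using fold_count[OF d _ , of "u mod d" v'] d0 v' fa by simp
  show "wdeg {0..<d div 2 + 1} (fw d) v * (\<Sum>u'\<in>?F. cycle_w m u u') = wdeg {0..<m} (cycle_w m) u * fw d v v'"
    unfolding sum e1 e2 wdeg_cycle[OF m ul] C[symmetric] using m by (simp add: field_simps)
qed

lemma half_mod:
  fixes d N :: nat
  assumes d: "2 \<le> d" and dN: "d dvd 2 * N"
  shows "N mod d = 0 \<or> (even d \<and> N mod d = d div 2)"
proof -
  let ?a = "N mod d"
  have "(2 * N) mod d = (2 * ?a) mod d" by (simp add: mod_mult_right_eq)
  then have "d dvd 2 * ?a" using dN by (simp add: dvd_eq_mod_eq_0)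
  then obtain t where t: "2 * ?a = d * t" by blast
  have al: "?a < d" using d by simp
  have "d * t < d * 2" using t al by linarith
  then have "t < 2" using d by simp
  then have "t = 0 \<or> t = 1" by auto
  then show ?thesis
  proof
    assume "t = 0" then show ?thesis using t by simp
  next
    assume "t = 1"
    then have e: "2 * ?a = d" using t by simp
    then have "even d" by (metis dvd_triv_left)
    moreover have "?a = d div 2" using e by simp
    ultimately show ?thesis by simp
  qed
qed

lemma path_fold_factor:
  assumes n': "2 \<le> n'" and d: "2 \<le> d" and dN: "d dvd 2 * (n' - 1)"
  shows "graph_factor {0..<d div 2 + 1} (fw d) {0..<n'} (path_w n')"
proof (rule factor_from_local[OF weight_fun_path[OF n'] weight_fun_fw[OF d] refl])
  define N where "N = n' - 1"
  have nN: "n' = N + 1" and N1: "1 \<le> N" using n' by (auto simp: N_def)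
  have dN': "d dvd 2 * N" using dN by (simp add: N_def)
  have "d \<le> 2 * N" using dN' N1 by (simp add: dvd_imp_le)
  then have hN: "d div 2 \<le> N" by simp
  then show "fm d ` {0..<n'} = {0..<d div 2 + 1}" using fm_image[OF d] nN by simp
  show "\<And>j. j + 1 < d div 2 + 1 \<Longrightarrow> 0 < fw d j (j + 1)" by (rule fw_conn)
  show "\<And>w. w \<in> {0..<d div 2 + 1} \<Longrightarrow> 0 < wdeg {0..<d div 2 + 1} (fw d) w"
    using fw_spos[OF d] by simp
  fix v v' j
  assume v: "v \<in> {0..<d div 2 + 1}" and v': "v' \<in> {0..<d div 2 + 1}" and j: "j \<in> {0..<n'}" and fj: "fm d j = v"
  let ?F = "{j' \<in> {0..<n'}. fm d j' = v'}"
  let ?s = "wdeg {0..<d div 2 + 1} (fw d) v"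
  have d0: "0 < d" using d by simp
  have jl: "j < n'" using j by simp
  have v'l: "v' \<le> d div 2" using v' by simp
  have sum: "(\<Sum>j'\<in>?F. path_w n' j j') =
     (of_bool (j + 1 < n' \<and> j + 1 \<in> ?F) + of_bool (0 < j \<and> j - 1 \<in> ?F)) / (2 * real N)"
  proof -
    have "?F \<subseteq> {0..<n'}" by auto
    from path_sum_set[OF n' jl this] show ?thesis by (simp add: N_def)
  qed
  have p: "wdeg {0..<n'} (path_w n') j = (of_bool (j + 1 < n') + of_bool (0 < j)) / (2 * real N)"
    using wdeg_path[OF n' jl] by (simp add: N_def)
  define a where "a = j mod d"
  have al: "a < d" using d0 by (simp add: a_def)
  have fa: "fm d a = v" using fj fm_mod by (simp add: a_def)
  have r1: "fm d (j + 1) = fm d (nx d a)"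
  proof -
    have "(j + 1) mod d = nx d a" by (simp add: a_def nx_def mod_Suc_eq)
    then show ?thesis using fm_mod[of d "j + 1"] by simp
  qed
  have r2: "fm d (j - 1) = fm d (pv d a)" if "0 < j"
  proof -
    have "(j - 1) mod d = (j + (d - 1)) mod d"
    proof -
      have "j + (d - 1) = (j - 1) + d" using that d0 by simp
      then show ?thesis by simp
    qed
    also have "\<dots> = pv d a" by (simp add: a_def pv_def mod_add_left_eq)
    finally show ?thesis using fm_mod[of d "j - 1"] by simp
  qed
  have C: "?s * (of_bool (fm d (nx d a) = v') + of_bool (fm d (pv d a) = v')) / 2 = fw d v v'"
    using fold_count[OF d al v'l] fa by simp
  have N0: "N < n'" using nN by simp
  show "?s * (\<Sum>j'\<in>?F. path_w n' j j') = wdeg {0..<n'} (path_w n') j * fw d v v'"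
  proof -
    consider (z) "j = 0" | (i) "0 < j" "j < N" | (e) "j = N" using jl nN by linarith
    then show ?thesis
    proof cases
      case z
      have a0: "a = 0" using z by (simp add: a_def)
      have same: "fm d (nx d a) = fm d (pv d a)" using fold_nb[OF d al] a0 fa
        by (auto simp: fm_def)
      have "j + 1 \<in> {0..<n'}" using z nN N1 by simp
      then have S: "(\<Sum>j'\<in>?F. path_w n' j j') = of_bool (fm d (nx d a) = v') / (2 * real N)"
        unfolding sum using z r1 nN N1 by simp
      have P: "wdeg {0..<n'} (path_w n') j = 1 / (2 * real N)" using p z nN N1 by simp
      show ?thesis unfolding S P
        using fold_count_end[OF d al v'l same] fa by simp
    next
      case i
      have "j + 1 \<in> {0..<n'}" "j - 1 \<in> {0..<n'}" using i nN by auto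
      then have S: "(\<Sum>j'\<in>?F. path_w n' j j') =
          (of_bool (fm d (nx d a) = v') + of_bool (fm d (pv d a) = v')) / (2 * real N)"
        unfolding sum using i r1 r2 nN by simp
      have P: "wdeg {0..<n'} (path_w n') j = 2 / (2 * real N)" using p i nN by simp
      show ?thesis unfolding S P C[symmetric] by (simp add: field_simps)
    next
      case e
      have HM: "N mod d = 0 \<or> (even d \<and> N mod d = d div 2)" using half_mod[OF d dN'] .
      have same: "fm d (nx d a) = fm d (pv d a)"
      proof -
        have "fm d a = 0 \<or> (fm d a = d div 2 \<and> even d)"
          using HM e by (auto simp: a_def fm_def)
        then show ?thesis using fold_nb[OF d al] by auto
      qed
      have "j - 1 \<in> {0..<n'}" using e nN by auto
      then have S: "(\<Sum>j'\<in>?F. path_w n' j j') = of_bool (fm d (nx d a) = v') / (2 * real N)"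
        unfolding sum using e r2 same nN N1 by simp
      have P: "wdeg {0..<n'} (path_w n') j = 1 / (2 * real N)" using p e nN N1 by simp
      show ?thesis unfolding S P
        using fold_count_end[OF d al v'l same] fa by simp
    qed
  qed
qed

lemma fw_nontrivial:
  assumes d: "2 \<le> d"
  shows "nontrivial_graph {0..<d div 2 + 1} (fw d)"
proof -
  have a: "0 < wdeg {0..<d div 2 + 1} (fw d) 0" by (rule fw_spos[OF d]) simp
  have b: "0 < wdeg {0..<d div 2 + 1} (fw d) 1" by (rule fw_spos[OF d]) (use d in simp)
  show ?thesis unfolding nontrivial_graph_def
    apply (rule bexI[of _ 0])
     apply (rule bexI[of _ 1])
    using a b d by auto
qed



lemma cf_fold:
  assumes wU: "weight_fun U \<alpha>" and wV: "weight_fun V \<beta>" and d: "2 \<le> d"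
    and f1: "graph_factor {0..<d div 2 + 1} (fw d) U \<alpha>"
    and f2: "graph_factor {0..<d div 2 + 1} (fw d) V \<beta>"
  shows "has_nontrivial_common_factor U \<alpha> V \<beta>"
  unfolding has_nontrivial_common_factor_def
  using weight_fun_fw[OF d] fw_nontrivial[OF d] f1 f2 by blast

theorem proposition4p9:
  fixes m n n' :: nat
  assumes "3 \<le> m" and "3 \<le> n" and "2 \<le> n'"
  shows "(weakly_disjoint {0..<m} (cycle_w m) {0..<n} (cycle_w n) \<longleftrightarrow>
            \<not> has_nontrivial_common_factor {0..<m} (cycle_w m) {0..<n} (cycle_w n))
       \<and> (strongly_disjoint {0..<m} (cycle_w m) {0..<n'} (path_w n') \<longleftrightarrow>
            \<not> has_nontrivial_common_factor {0..<m} (cycle_w m) {0..<n'} (path_w n'))"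
proof
  have wm: "weight_fun {0..<m} (cycle_w m)" using weight_fun_cycle assms(1) .
  have wn: "weight_fun {0..<n} (cycle_w n)" using weight_fun_cycle assms(2) .
  have wp: "weight_fun {0..<n'} (path_w n')" using weight_fun_path assms(3) .
  show "weakly_disjoint {0..<m} (cycle_w m) {0..<n} (cycle_w n) \<longleftrightarrow>
            \<not> has_nontrivial_common_factor {0..<m} (cycle_w m) {0..<n} (cycle_w n)"
  proof (cases "coprime m n")
    case True
    then have "weakly_disjoint {0..<m} (cycle_w m) {0..<n} (cycle_w n)"
      using cycles_weakly_disjoint assms by blast
    then show ?thesis using cf_not_disjoint(1)[OF wm wn] by blast
  next
    case False
    define d where "d = gcd m n"
    have "d \<noteq> 1" using False by (simp add: d_def coprime_iff_gcd_eq_1)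
    moreover have "0 < d" using assms by (simp add: d_def)
    ultimately have d2: "2 \<le> d" by simp
    have "has_nontrivial_common_factor {0..<m} (cycle_w m) {0..<n} (cycle_w n)"
      by (rule cf_fold[OF wm wn d2 cycle_fold_factor cycle_fold_factor])
         (use assms d2 in \<open>auto simp: d_def\<close>)
    then show ?thesis using cf_not_disjoint(1)[OF wm wn] by blast
  qed
  show "strongly_disjoint {0..<m} (cycle_w m) {0..<n'} (path_w n') \<longleftrightarrow>
            \<not> has_nontrivial_common_factor {0..<m} (cycle_w m) {0..<n'} (path_w n')"
  proof (cases "coprime m (2 * (n' - 1))")
    case True
    then have "strongly_disjoint {0..<m} (cycle_w m) {0..<n'} (path_w n')"
      using cycle_path_strongly_disjoint assms by blast
    then show ?thesis using cf_not_disjoint(2)[OF wm wp] by blast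
  next
    case False
    define d where "d = gcd m (2 * (n' - 1))"
    have "d \<noteq> 1" using False by (simp add: d_def coprime_iff_gcd_eq_1)
    moreover have "0 < d" using assms by (simp add: d_def)
    ultimately have d2: "2 \<le> d" by simp
    have "has_nontrivial_common_factor {0..<m} (cycle_w m) {0..<n'} (path_w n')"
      by (rule cf_fold[OF wm wp d2 cycle_fold_factor path_fold_factor])
         (use assms d2 in \<open>auto simp: d_def\<close>)
    then show ?thesis using cf_not_disjoint(2)[OF wm wp] by blast
  qed
qed

end
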